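(* In the setting described in the context, suppose sequential ignorability, the overlap condition (with constant $\eta$) and correct specification hold. Then the regret of the estimated DTR $\hat\pi$ satisfies $$R(\hat{\pi}) \leq R_{1}^{\hat{\pi}_{1:T}}(\pi_{1}^{*,B}) + \sum_{t=2}^{T} \frac{2^{t-2}}{\eta^{t-1}} R_{t}^{\hat{\pi}_{t:T}}(\pi_{t}^{*,B}).$$
   Context: Fix $T\ge1$; $\mathcal{A}_t=\{0,\dots,d_t-1\}$; $\underline v_t=(v_1,\dots,v_t)$, $\underline v_{s:t}=(v_s,\dots,v_t)$, $\underline{\mathcal{A}}_t=\mathcal{A}_1\times\cdots\times\mathcal{A}_t$. Potential outcomes $Y_t(\underline a_t)$, potential states $S_t(\underline a_{t-1})$; observed $A_t$, $S_t=S_t(\underline A_{t-1})$, $Y_t=Y_t(\underline A_t)$; potential history $H_t(\underline a_{t-1})=(\underline a_{t-1},S_1,S_2(\underline a_1),\dots,S_t(\underline a_{t-1}))$, observed $H_t=H_t(\underline A_{t-1})$ with support $\mathcal{H}_t$. $e_t(h_t,a_t)=\mathbb{P}(A_t=a_t\mid H_t=h_t)$. Stage-$t$ policies are measurable $\pi_t:\mathcal{H}_t\to\mathcal{A}_t$; DTR $\pi=(\pi_1,\dots,\pi_T)$; class $\Pi=\Pi_1\times\cdots\times\Pi_T$, $\Pi_{s:t}=\Pi_s\times\cdots\times\Pi_t$. Welfare $W(\pi)=\mathbb{E}[\sum_{t}\sum_{\underline a_t}Y_t(\underline a_t)\prod_{s\le t}\mathbf{1}\{\pi_s(H_s(\underline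 a_{s-1}))=a_s\}]$, regret $R(\pi)=\max_{\tilde\pi\in\Pi}W(\tilde\pi)-W(\pi)$. Policy value: $V_t(\pi_{t:T})=\mathbb{E}[\sum_{s=t}^T\sum_{\underline a_s\in\underline{\mathcal{A}}_s}Y_s(\underline a_s)\mathbf{1}\{\underline A_{t-1}=\underline a_{t-1}\}\prod_{\ell=t}^s\mathbf{1}\{\pi_\ell(H_\ell(\underline a_{\ell-1}))=a_\ell\}]$ (indicator on $\underline A_0$ equal to 1). For $\pi_t\in\Pi_t$: $R_t^{\hat\pi_{t:T}}(\pi_t)=V_t(\pi_t,\hat\pi_{(t+1):T})-V_t(\hat\pi_{t:T})$. Q-functions: $Q_T(h_T,a_T)=\mathbb{E}[Y_T\mid H_T=h_T,A_T=a_T]$; for $t<T$, $Q_t^{\pi_{(t+1):T}}(h_t,a_t)=\mathbb{E}[Y_t+Q_{t+1}^{\pi_{(t+2):T}}(H_{t+1},\pi_{t+1}(H_{t+1}))\mid H_t=h_t,A_t=a_t]$ (with $Q_T^{\pi_{(T+1):T}}=Q_T$). Backward induction: $\pi_T^{*,B}\in\arg\max_{\Pi_T}\mathbb{E}[Q_T(H_T,\pi_T(H_T))]$, $\pi_t^{*,B}\in\arg\max_{\Pi_t}\mathbb{E}[Q_t^{\pi^{*,B}_{(t+1):T}}(H_t,\pi_t(H_t))]$. $\hat\pi=(\hat\pi_1,\dots,\hat\pi_T)\in\Pi$ is the DTR output by the doubly robust backward-induction algorithm (cross-fitted AIPW scores maximized stage by stage from $T$ down to $1$); the inequality concerns this element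 of $\Pi$. (Sequential ignorability) $\{Y_t(\underline a_t),\dots,Y_T(\underline a_T),S_{t+1}(\underline a_t),\dots,S_T(\underline a_{T-1})\}\perp A_t\mid H_t$ for all $t,\underline a_T$. (Overlap) $\eta\in(0,1)$ with $e_t(h_t,a_t)\ge\eta$ whenever $\pi_t(h_t)=a_t$ for some $\pi_t\in\Pi_t$. (Correct specification) There is $\pi^*_{2:T}\in\Pi_{2:T}$ with $Q_t^{\pi^*_{(t+1):T}}(H_t,\pi^*_t(H_t))\ge\sup_{\pi_t\in\Pi_t}Q_t^{\pi^*_{(t+1):T}}(H_t,\pi_t(H_t))$ a.s., $t=2,\dots,T$. *)

theory Defs
  imports "HOL-Probability.Probability"
begin

text \<open>Stages are indexed by t = 1..T. Actions are natural numbers,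
  the stage-t action set is the set of numbers below d t. An action sequence
  (a_1,...,a_t) is a list a of length t with a!(s-1) = a_s. Potential states:
  S t a with a of length t-1 (S 1 []), potential outcomes: Y t a with a of length t. A history is a pair (previous actions, states), the
  states being stored as an extensional function on {1..t}.\<close>

type_synonym 's hist = "nat list \<times> (nat \<Rightarrow> 's)"

definition act_seqs :: "(nat \<Rightarrow> nat) \<Rightarrow> nat \<Rightarrow> nat list set" where
  "act_seqs d t = {a. length a = t \<and> (\<forall>i<t. a ! i < d (Suc i))}"

definition obs_acts :: "(nat \<Rightarrow> 'w \<Rightarrow> nat) \<Rightarrow> nat \<Rightarrow> 'w \<Rightarrow> nat list" where
  "obs_acts A t \<omega> = map (\<lambda>s. A s \<omega>) [1..<Suc t]"

definition pot_hist :: "(nat \<Rightarrow> nat list \<Rightarrow> 'w \<Rightarrow> 's) \<Rightarrow> nat \<Rightarrow> nat list \<Rightarrow> 'w \<Rightarrow> 's hist" where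
  "pot_hist S t a \<omega> = (take (t - 1) a, restrict (\<lambda>s. S s (take (s - 1) a) \<omega>) {1..t})"

definition obs_hist :: "(nat \<Rightarrow> nat list \<Rightarrow> 'w \<Rightarrow> 's) \<Rightarrow> (nat \<Rightarrow> 'w \<Rightarrow> nat) \<Rightarrow> nat \<Rightarrow> 'w \<Rightarrow> 's hist" where
  "obs_hist S A t \<omega> = pot_hist S t (obs_acts A (t - 1) \<omega>) \<omega>"

definition hist_space :: "'s measure \<Rightarrow> nat \<Rightarrow> 's hist measure" where
  "hist_space SM t = count_space UNIV \<Otimes>\<^sub>M (\<Pi>\<^sub>M s\<in>{1..t}. SM)"

definition policy_class :: "nat \<Rightarrow> (nat \<Rightarrow> ('s hist \<Rightarrow> nat) set) \<Rightarrow> (nat \<Rightarrow> 's hist \<Rightarrow> nat) set" where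
  "policy_class T Pcl = {\<pi>. \<forall>t\<in>{1..T}. \<pi> t \<in> Pcl t}"

definition welfare ::
  "'w measure \<Rightarrow> nat \<Rightarrow> (nat \<Rightarrow> nat) \<Rightarrow> (nat \<Rightarrow> nat list \<Rightarrow> 'w \<Rightarrow> 's)
   \<Rightarrow> (nat \<Rightarrow> nat list \<Rightarrow> 'w \<Rightarrow> real) \<Rightarrow> (nat \<Rightarrow> 's hist \<Rightarrow> nat) \<Rightarrow> real" where
  "welfare M T d S Y \<pi> =
     (\<integral>\<omega>. (\<Sum>t\<in>{1..T}. \<Sum>a\<in>act_seqs d t.
        Y t a \<omega> * (\<Prod>s\<in>{1..t}. of_bool (\<pi> s (pot_hist S s (take (s - 1) a) \<omega>) = a ! (s - 1)))) \<partial>M)"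

definition regret ::
  "'w measure \<Rightarrow> nat \<Rightarrow> (nat \<Rightarrow> nat) \<Rightarrow> (nat \<Rightarrow> nat list \<Rightarrow> 'w \<Rightarrow> 's)
   \<Rightarrow> (nat \<Rightarrow> nat list \<Rightarrow> 'w \<Rightarrow> real) \<Rightarrow> (nat \<Rightarrow> ('s hist \<Rightarrow> nat) set)
   \<Rightarrow> (nat \<Rightarrow> 's hist \<Rightarrow> nat) \<Rightarrow> real" where
  "regret M T d S Y Pcl \<pi> =
     (SUP \<pi>'\<in>policy_class T Pcl. welfare M T d S Y \<pi>') - welfare M T d S Y \<pi>"

definition policy_value ::
  "'w measure \<Rightarrow> nat \<Rightarrow> (nat \<Rightarrow> nat) \<Rightarrow> (nat \<Rightarrow> nat list \<Rightarrow> 'w \<Rightarrow> 's) \<Rightarrow> (nat \<Rightarrow> 'w \<Rightarrow> nat)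
   \<Rightarrow> (nat \<Rightarrow> nat list \<Rightarrow> 'w \<Rightarrow> real) \<Rightarrow> nat \<Rightarrow> (nat \<Rightarrow> 's hist \<Rightarrow> nat) \<Rightarrow> real" where
  "policy_value M T d S A Y t \<pi> =
     (\<integral>\<omega>. (\<Sum>s\<in>{t..T}. \<Sum>a\<in>act_seqs d s.
        Y s a \<omega> * of_bool (obs_acts A (t - 1) \<omega> = take (t - 1) a) *
        (\<Prod>l\<in>{t..s}. of_bool (\<pi> l (pot_hist S l (take (l - 1) a) \<omega>) = a ! (l - 1)))) \<partial>M)"

definition stage_regret ::
  "'w measure \<Rightarrow> nat \<Rightarrow> (nat \<Rightarrow> nat) \<Rightarrow> (nat \<Rightarrow> nat list \<Rightarrow> 'w \<Rightarrow> 's) \<Rightarrow> (nat \<Rightarrow> 'w \<Rightarrow> nat)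
   \<Rightarrow> (nat \<Rightarrow> nat list \<Rightarrow> 'w \<Rightarrow> real) \<Rightarrow> nat \<Rightarrow> (nat \<Rightarrow> 's hist \<Rightarrow> nat) \<Rightarrow> ('s hist \<Rightarrow> nat) \<Rightarrow> real" where
  "stage_regret M T d S A Y t \<pi>h \<pi>t =
     policy_value M T d S A Y t (\<pi>h(t := \<pi>t)) - policy_value M T d S A Y t \<pi>h"

text \<open>q is a version of the conditional expectation E[target | H_t = h, A_t = a],
  viewed as a function of (h, a).\<close>
definition is_cond_reg ::
  "'w measure \<Rightarrow> 's measure \<Rightarrow> (nat \<Rightarrow> nat list \<Rightarrow> 'w \<Rightarrow> 's) \<Rightarrow> (nat \<Rightarrow> 'w \<Rightarrow> nat) \<Rightarrow> nat
   \<Rightarrow> ('w \<Rightarrow> real) \<Rightarrow> ('s hist \<Rightarrow> nat \<Rightarrow> real) \<Rightarrow> bool" where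
  "is_cond_reg M SM S A t target q \<longleftrightarrow>
     (\<lambda>(h, a). q h a) \<in> borel_measurable (hist_space SM t \<Otimes>\<^sub>M count_space UNIV) \<and>
     integrable M target \<and>
     integrable M (\<lambda>\<omega>. q (obs_hist S A t \<omega>) (A t \<omega>)) \<and>
     (\<forall>B\<in>sets (hist_space SM t). \<forall>a.
        (\<integral>\<omega>. indicator B (obs_hist S A t \<omega>) * of_bool (A t \<omega> = a) * target \<omega> \<partial>M) =
        (\<integral>\<omega>. indicator B (obs_hist S A t \<omega>) * of_bool (A t \<omega> = a) * q (obs_hist S A t \<omega>) a \<partial>M))"

text \<open>Qf pi t is a version of Q_t^{pi_{(t+1):T}} (for t = T: Q_T), for every DTR pi
  whose components 2..T lie in the class.\<close>
definition is_Q_family ::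
  "'w measure \<Rightarrow> nat \<Rightarrow> 's measure \<Rightarrow> (nat \<Rightarrow> nat list \<Rightarrow> 'w \<Rightarrow> 's) \<Rightarrow> (nat \<Rightarrow> 'w \<Rightarrow> nat)
   \<Rightarrow> (nat \<Rightarrow> nat list \<Rightarrow> 'w \<Rightarrow> real) \<Rightarrow> (nat \<Rightarrow> ('s hist \<Rightarrow> nat) set)
   \<Rightarrow> ((nat \<Rightarrow> 's hist \<Rightarrow> nat) \<Rightarrow> nat \<Rightarrow> 's hist \<Rightarrow> nat \<Rightarrow> real) \<Rightarrow> bool" where
  "is_Q_family M T SM S A Y Pcl Qf \<longleftrightarrow>
     (\<forall>\<pi>. (\<forall>t\<in>{2..T}. \<pi> t \<in> Pcl t) \<longrightarrow>
       (\<forall>t\<in>{1..T}. is_cond_reg M SM S A t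
          (\<lambda>\<omega>. Y t (obs_acts A t \<omega>) \<omega> +
                (if t < T then Qf \<pi> (Suc t) (obs_hist S A (Suc t) \<omega>) (\<pi> (Suc t) (obs_hist S A (Suc t) \<omega>))
                 else 0))
          (Qf \<pi> t)))"

text \<open>e t is a version of the propensity score e_t(h, a) = P(A_t = a | H_t = h).\<close>
definition is_propensity ::
  "'w measure \<Rightarrow> 's measure \<Rightarrow> (nat \<Rightarrow> nat list \<Rightarrow> 'w \<Rightarrow> 's) \<Rightarrow> (nat \<Rightarrow> 'w \<Rightarrow> nat) \<Rightarrow> nat
   \<Rightarrow> ('s hist \<Rightarrow> nat \<Rightarrow> real) \<Rightarrow> bool" where
  "is_propensity M SM S A t e \<longleftrightarrow>
     (\<lambda>(h, a). e h a) \<in> borel_measurable (hist_space SM t \<Otimes>\<^sub>M count_space UNIV) \<and>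
     (\<forall>B\<in>sets (hist_space SM t). \<forall>a.
        (\<integral>\<omega>. indicator B (obs_hist S A t \<omega>) * of_bool (A t \<omega> = a) \<partial>M) =
        (\<integral>\<omega>. indicator B (obs_hist S A t \<omega>) * e (obs_hist S A t \<omega>) a \<partial>M))"

definition cond_indep ::
  "'w measure \<Rightarrow> ('w \<Rightarrow> 'x) \<Rightarrow> 'x measure \<Rightarrow> ('w \<Rightarrow> 'z) \<Rightarrow> 'z measure
   \<Rightarrow> ('w \<Rightarrow> 'h) \<Rightarrow> 'h measure \<Rightarrow> bool" where
  "cond_indep M X MX Z MZ H MH \<longleftrightarrow>
     (\<forall>C\<in>sets MX. \<forall>D\<in>sets MZ. AE \<omega> in M.
        real_cond_exp M (vimage_algebra (space M) H MH)
          (\<lambda>\<omega>. indicator C (X \<omega>) * indicator D (Z \<omega>)) \<omega> =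
        real_cond_exp M (vimage_algebra (space M) H MH) (\<lambda>\<omega>. indicator C (X \<omega>)) \<omega> *
        real_cond_exp M (vimage_algebra (space M) H MH) (\<lambda>\<omega>. indicator D (Z \<omega>)) \<omega>)"

definition seq_ignorability ::
  "'w measure \<Rightarrow> nat \<Rightarrow> (nat \<Rightarrow> nat) \<Rightarrow> 's measure \<Rightarrow> (nat \<Rightarrow> nat list \<Rightarrow> 'w \<Rightarrow> 's)
   \<Rightarrow> (nat \<Rightarrow> 'w \<Rightarrow> nat) \<Rightarrow> (nat \<Rightarrow> nat list \<Rightarrow> 'w \<Rightarrow> real) \<Rightarrow> bool" where
  "seq_ignorability M T d SM S A Y \<longleftrightarrow>
     (\<forall>t\<in>{1..T}. \<forall>a\<in>act_seqs d T.
        cond_indep M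
          (\<lambda>\<omega>. (restrict (\<lambda>s. Y s (take s a) \<omega>) {t..T},
                 restrict (\<lambda>s. S s (take (s - 1) a) \<omega>) {Suc t..T}))
          ((\<Pi>\<^sub>M s\<in>{t..T}. (borel :: real measure)) \<Otimes>\<^sub>M (\<Pi>\<^sub>M s\<in>{Suc t..T}. SM))
          (A t) (count_space UNIV)
          (obs_hist S A t) (hist_space SM t))"

end

theory Submission
  imports Defs
begin

lemma countable_nat_list_set: "countable (X :: nat list set)"
  by (rule countable_subset[OF subset_UNIV]) simp

locale setting =
  fixes M :: "'w measure" and SM :: "'s measure"
    and T :: nat and d :: "nat \<Rightarrow> nat"
    and S :: "nat \<Rightarrow> nat list \<Rightarrow> 'w \<Rightarrow> 's"
    and Y :: "nat \<Rightarrow> nat list \<Rightarrow> 'w \<Rightarrow> real"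
    and A :: "nat \<Rightarrow> 'w \<Rightarrow> nat"
    and Pcl :: "nat \<Rightarrow> ('s hist \<Rightarrow> nat) set"
    and e :: "nat \<Rightarrow> 's hist \<Rightarrow> nat \<Rightarrow> real"
    and Qf :: "(nat \<Rightarrow> 's hist \<Rightarrow> nat) \<Rightarrow> nat \<Rightarrow> 's hist \<Rightarrow> nat \<Rightarrow> real"
    and \<eta> :: real
  assumes prob: "prob_space M"
    and T_pos: "1 \<le> T"
    and A_meas: "\<And>t. t \<in> {1..T} \<Longrightarrow> A t \<in> measurable M (count_space UNIV)"
    and A_range: "\<And>t \<omega>. t \<in> {1..T} \<Longrightarrow> \<omega> \<in> space M \<Longrightarrow> A t \<omega> < d t"
    and S_meas: "\<And>t a. t \<in> {1..T} \<Longrightarrow> a \<in> act_seqs d (t - 1) \<Longrightarrow> S t a \<in> measurable M SM"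
    and Y_int: "\<And>t a. t \<in> {1..T} \<Longrightarrow> a \<in> act_seqs d t \<Longrightarrow> integrable M (Y t a)"
    and Pi_meas: "\<And>t. t \<in> {1..T} \<Longrightarrow> Pcl t \<subseteq> measurable (hist_space SM t) (count_space UNIV)"
    and Pi_range: "\<And>t \<pi> h. t \<in> {1..T} \<Longrightarrow> \<pi> \<in> Pcl t \<Longrightarrow> \<pi> h < d t"
    and propensity: "\<And>t. t \<in> {1..T} \<Longrightarrow> is_propensity M SM S A t (e t)"
    and Q: "is_Q_family M T SM S A Y Pcl Qf"
    and ignorability: "seq_ignorability M T d SM S A Y"
    and eta: "0 < \<eta>" "\<eta> < 1"
    and overlap: "\<And>t. t \<in> {1..T} \<Longrightarrow>
       AE \<omega> in M. \<forall>a. (\<exists>\<pi>\<in>Pcl t. \<pi> (obs_hist S A t \<omega>) = a) \<longrightarrow> \<eta> \<le> e t (obs_hist S A t \<omega>) a"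
begin

abbreviation H where "H t \<equiv> obs_hist S A t"

lemma P: "prob_space M" by (rule prob)

lemma space_nonempty: "space M \<noteq> {}"
  using prob prob_space.not_empty by blast

lemma d_pos: "t \<in> {1..T} \<Longrightarrow> 0 < d t"
  using A_range space_nonempty by fastforce

lemma obs_acts_Suc: "obs_acts A (Suc t) \<omega> = obs_acts A t \<omega> @ [A (Suc t) \<omega>]"
  by (simp add: obs_acts_def)

lemma length_obs_acts[simp]: "length (obs_acts A t \<omega>) = t"
  by (simp add: obs_acts_def)

lemma nth_obs_acts: "i < t \<Longrightarrow> obs_acts A t \<omega> ! i = A (Suc i) \<omega>"
  by (simp add: obs_acts_def nth_append del: upt_Suc)

lemma obs_acts_in: "t \<le> T \<Longrightarrow> \<omega> \<in> space M \<Longrightarrow> obs_acts A t \<omega> \<in> act_seqs d t"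
  by (auto simp: act_seqs_def nth_obs_acts intro!: A_range)

lemma obs_acts_meas: "t \<le> T \<Longrightarrow> obs_acts A t \<in> measurable M (count_space UNIV)"
proof (induction t)
  case 0 then show ?case by (simp add: obs_acts_def)
next
  case (Suc t)
  have "(\<lambda>\<omega>. (obs_acts A t \<omega>, A (Suc t) \<omega>)) \<in> measurable M (count_space UNIV \<Otimes>\<^sub>M count_space UNIV)"
    using Suc by (auto intro!: measurable_Pair A_meas)
  then have "(\<lambda>\<omega>. (obs_acts A t \<omega>, A (Suc t) \<omega>)) \<in> measurable M (count_space UNIV)"
    by (simp add: pair_measure_countable)
  then have "(\<lambda>\<omega>. case_prod (\<lambda>l x. l @ [x]) (obs_acts A t \<omega>, A (Suc t) \<omega>)) \<in> measurable M (count_space UNIV)"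
    by (rule measurable_compose) simp
  then show ?case by (simp add: obs_acts_Suc)
qed

lemma pot_hist_meas:
  assumes "\<And>s. s \<in> {1..t} \<Longrightarrow> S s (take (s - 1) a) \<in> measurable M SM"
  shows "pot_hist S t a \<in> measurable M (hist_space SM t)"
  unfolding pot_hist_def hist_space_def
proof (intro measurable_Pair measurable_restrict)
  fix s assume "s \<in> {1..t}"
  then show "(\<lambda>\<omega>. S s (take (s - 1) a) \<omega>) \<in> M \<rightarrow>\<^sub>M SM" using assms by simp
qed simp

lemma take_act_seqs: "a \<in> act_seqs d t \<Longrightarrow> k \<le> t \<Longrightarrow> take k a \<in> act_seqs d k"
  by (auto simp: act_seqs_def)

lemma pot_hist_meas':
  assumes "t \<le> T" "a \<in> act_seqs d k" "t - 1 \<le> k"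
  shows "pot_hist S t a \<in> measurable M (hist_space SM t)"
proof (rule pot_hist_meas)
  fix s assume s: "s \<in> {1..t}"
  have "take (s - 1) a \<in> act_seqs d (s - 1)" using assms s by (intro take_act_seqs) auto
  then show "S s (take (s - 1) a) \<in> measurable M SM" using s assms by (intro S_meas) auto
qed

lemma H_meas: assumes "t \<le> T" shows "H t \<in> measurable M (hist_space SM t)"
proof -
  have "(\<lambda>\<omega>. pot_hist S t (obs_acts A (t - 1) \<omega>) \<omega>) \<in> measurable M (hist_space SM t)"
  proof (rule measurable_compose_countable'[where I="act_seqs d (t - 1)"])
    fix a assume "a \<in> act_seqs d (t - 1)"
    then show "pot_hist S t a \<in> measurable M (hist_space SM t)"
      using assms by (intro pot_hist_meas') auto
  next
    show "obs_acts A (t - 1) \<in> measurable M (count_space (act_seqs d (t - 1)))"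
      using assms obs_acts_meas[of "t - 1"] obs_acts_in[of "t - 1"]
      by (auto simp: measurable_count_space_eq2_countable countable_nat_list_set)
  qed (simp add: countable_nat_list_set)
  then show ?thesis by (simp add: obs_hist_def[abs_def])
qed

end

lemma integrable_ind_mult:
  fixes f :: "'a \<Rightarrow> real"
  assumes X[measurable]: "X \<in> measurable M MX" and B[measurable]: "B \<in> sets MX"
    and f: "integrable M f"
  shows "integrable M (\<lambda>\<omega>. indicator B (X \<omega>) * f \<omega>)"
proof (rule Bochner_Integration.integrable_bound[OF f])
  show "(\<lambda>\<omega>. indicator B (X \<omega>) * f \<omega>) \<in> borel_measurable M"
  proof -
    have [measurable]: "f \<in> borel_measurable M" using f by (rule borel_measurable_integrable)
    show ?thesis by measurable
  qed
  show "AE x in M. norm (indicator B (X x) * f x) \<le> norm (f x)"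
    by (auto simp: indicator_def)
qed

lemma emeasure_distr_density_real:
  fixes f :: "'a \<Rightarrow> real"
  assumes X[measurable]: "X \<in> measurable M MX" and B[measurable]: "B \<in> sets MX"
    and f[measurable]: "f \<in> borel_measurable M" and nn: "\<And>\<omega>. \<omega> \<in> space M \<Longrightarrow> 0 \<le> f \<omega>"
    and int: "integrable M f"
  shows "emeasure (distr (density M f) MX X) B = ennreal (\<integral>\<omega>. indicator B (X \<omega>) * f \<omega> \<partial>M)"
proof -
  have "emeasure (distr (density M f) MX X) B = emeasure (density M f) (X -` B \<inter> space M)"
    by (subst emeasure_distr) auto
  also have "\<dots> = (\<integral>\<^sup>+ \<omega>. ennreal (f \<omega>) * indicator (X -` B \<inter> space M) \<omega> \<partial>M)"
    by (subst emeasure_density) auto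
  also have "\<dots> = (\<integral>\<^sup>+ \<omega>. ennreal (indicator B (X \<omega>) * f \<omega>) \<partial>M)"
    by (intro nn_integral_cong) (auto simp: indicator_def)
  also have "\<dots> = ennreal (\<integral>\<omega>. indicator B (X \<omega>) * f \<omega> \<partial>M)"
    by (intro nn_integral_eq_integral integrable_ind_mult[OF X B int]) (auto simp: nn)
  finally show ?thesis .
qed

lemma distr_density_eq:
  fixes f g :: "'a \<Rightarrow> real"
  assumes X[measurable]: "X \<in> measurable M MX"
    and [measurable]: "f \<in> borel_measurable M" "g \<in> borel_measurable M"
    and nnf: "\<And>\<omega>. \<omega> \<in> space M \<Longrightarrow> 0 \<le> f \<omega>" and nng: "\<And>\<omega>. \<omega> \<in> space M \<Longrightarrow> 0 \<le> g \<omega>"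
    and intf: "integrable M f" and intg: "integrable M g"
    and gen: "sets MX = sigma_sets (space MX) E" "E \<subseteq> Pow (space MX)" "Int_stable E" "space MX \<in> E"
    and eq: "\<And>B. B \<in> E \<Longrightarrow> (\<integral>\<omega>. indicator B (X \<omega>) * f \<omega> \<partial>M) = (\<integral>\<omega>. indicator B (X \<omega>) * g \<omega> \<partial>M)"
  shows "distr (density M f) MX X = distr (density M g) MX X"
proof (rule measure_eqI_generator_eq[where E=E and \<Omega>="space MX" and A="\<lambda>_. space MX"])
  have EM: "B \<in> sets MX" if "B \<in> E" for B
    using that gen(1) by (auto intro: sigma_sets.Basic)
  show "emeasure (distr (density M f) MX X) B = emeasure (distr (density M g) MX X) B" if "B \<in> E" for B
    using EM[OF that] eq[OF that]
    by (simp add: emeasure_distr_density_real[OF X _ _ nnf intf] emeasure_distr_density_real[OF X _ _ nng intg])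
  show "emeasure (distr (density M f) MX X) (space MX) \<noteq> \<infinity>" for i :: nat
    by (simp add: emeasure_distr_density_real[OF X _ _ nnf intf])
qed (use gen in auto)

lemma integral_transfer:
  fixes f g :: "'a \<Rightarrow> real" and F :: "'x \<Rightarrow> real"
  assumes X[measurable]: "X \<in> measurable M MX"
    and [measurable]: "f \<in> borel_measurable M" "g \<in> borel_measurable M"
    and nnf: "\<And>\<omega>. \<omega> \<in> space M \<Longrightarrow> 0 \<le> f \<omega>" and nng: "\<And>\<omega>. \<omega> \<in> space M \<Longrightarrow> 0 \<le> g \<omega>"
    and eqm: "distr (density M f) MX X = distr (density M g) MX X"
    and F[measurable]: "F \<in> borel_measurable MX"
  shows "integrable M (\<lambda>\<omega>. F (X \<omega>) * f \<omega>) \<longleftrightarrow> integrable M (\<lambda>\<omega>. F (X \<omega>) * g \<omega>)"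
    and "(\<integral>\<omega>. F (X \<omega>) * f \<omega> \<partial>M) = (\<integral>\<omega>. F (X \<omega>) * g \<omega> \<partial>M)"
proof -
  have X': "X \<in> measurable (density M h) MX" for h :: "'a \<Rightarrow> ennreal"
    by simp
  have i: "integrable M (\<lambda>\<omega>. F (X \<omega>) * h \<omega>) \<longleftrightarrow> integrable (distr (density M h) MX X) F"
    if [measurable]: "h \<in> borel_measurable M" and nn: "\<And>\<omega>. \<omega> \<in> space M \<Longrightarrow> 0 \<le> h \<omega>" for h
    by (subst integrable_distr_eq[OF X' F], subst integrable_density)
       (auto simp: nn mult.commute)
  have j: "(\<integral>\<omega>. F (X \<omega>) * h \<omega> \<partial>M) = integral\<^sup>L (distr (density M h) MX X) F"
    if [measurable]: "h \<in> borel_measurable M" and nn: "\<And>\<omega>. \<omega> \<in> space M \<Longrightarrow> 0 \<le> h \<omega>" for h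
    by (subst integral_distr[OF X' F], subst integral_density)
       (auto simp: nn mult.commute)
  show "integrable M (\<lambda>\<omega>. F (X \<omega>) * f \<omega>) \<longleftrightarrow> integrable M (\<lambda>\<omega>. F (X \<omega>) * g \<omega>)"
    using eqm by (simp add: i nnf nng)
  show "(\<integral>\<omega>. F (X \<omega>) * f \<omega> \<partial>M) = (\<integral>\<omega>. F (X \<omega>) * g \<omega> \<partial>M)"
    using eqm by (simp add: j nnf nng)
qed


lemma cr_transfer:
  fixes g :: "'a \<Rightarrow> real" and F :: "'x \<Rightarrow> real"
  assumes X[measurable]: "X \<in> measurable M MX"
    and g: "integrable M g"
    and zero: "\<And>B. B \<in> sets MX \<Longrightarrow> (\<integral>\<omega>. indicator B (X \<omega>) * g \<omega> \<partial>M) = 0"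
    and F[measurable]: "F \<in> borel_measurable MX"
    and Fg: "integrable M (\<lambda>\<omega>. F (X \<omega>) * g \<omega>)"
  shows "(\<integral>\<omega>. F (X \<omega>) * g \<omega> \<partial>M) = 0"
proof -
  have [measurable]: "g \<in> borel_measurable M" using g by (rule borel_measurable_integrable)
  define gp where "gp \<omega> = max 0 (g \<omega>)" for \<omega>
  define gm where "gm \<omega> = max 0 (- g \<omega>)" for \<omega>
  have [measurable]: "gp \<in> borel_measurable M" "gm \<in> borel_measurable M"
    unfolding gp_def gm_def by measurable
  have gpm: "g \<omega> = gp \<omega> - gm \<omega>" for \<omega> by (simp add: gp_def gm_def max_def)
  have ip: "integrable M gp" "integrable M gm"
    unfolding gp_def gm_def using g by (auto intro!: integrable_max)
  have eqm: "distr (density M gp) MX X = distr (density M gm) MX X"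
  proof (rule distr_density_eq[OF X _ _ _ _ ip, where E="sets MX"])
    fix B assume B: "B \<in> sets MX"
    have "0 = (\<integral>\<omega>. indicator B (X \<omega>) * gp \<omega> - indicator B (X \<omega>) * gm \<omega> \<partial>M)"
      using zero[OF B] by (simp add: gpm right_diff_distrib)
    also have "\<dots> = (\<integral>\<omega>. indicator B (X \<omega>) * gp \<omega> \<partial>M) - (\<integral>\<omega>. indicator B (X \<omega>) * gm \<omega> \<partial>M)"
      using B by (intro Bochner_Integration.integral_diff integrable_ind_mult[OF X] ip) auto
    finally show "(\<integral>\<omega>. indicator B (X \<omega>) * gp \<omega> \<partial>M) = (\<integral>\<omega>. indicator B (X \<omega>) * gm \<omega> \<partial>M)"
      by simp
  qed (auto simp: gp_def gm_def sets.sigma_sets_eq Int_stable_def dest: sets.sets_into_space)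
  have ifp: "integrable M (\<lambda>\<omega>. F (X \<omega>) * gp \<omega>)"
    by (rule Bochner_Integration.integrable_bound[OF Fg]) (auto simp: gp_def abs_mult intro!: mult_left_mono)
  have ifm: "integrable M (\<lambda>\<omega>. F (X \<omega>) * gm \<omega>)"
    by (rule Bochner_Integration.integrable_bound[OF Fg]) (auto simp: gm_def abs_mult intro!: mult_left_mono)
  have "(\<integral>\<omega>. F (X \<omega>) * g \<omega> \<partial>M) = (\<integral>\<omega>. F (X \<omega>) * gp \<omega> - F (X \<omega>) * gm \<omega> \<partial>M)"
    by (simp add: gpm right_diff_distrib)
  also have "\<dots> = (\<integral>\<omega>. F (X \<omega>) * gp \<omega> \<partial>M) - (\<integral>\<omega>. F (X \<omega>) * gm \<omega> \<partial>M)"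
    by (rule Bochner_Integration.integral_diff[OF ifp ifm])
  also have "\<dots> = 0"
    using integral_transfer(2)[OF X _ _ _ _ eqm F] by (simp add: gp_def gm_def)
  finally show ?thesis .
qed

lemma AE_unit_from_sets:
  fixes f :: "'x \<Rightarrow> real" and g :: "'a \<Rightarrow> real"
  assumes P: "prob_space M"
    and X[measurable]: "X \<in> measurable M MX" and f[measurable]: "f \<in> borel_measurable MX"
    and g: "integrable M g" and g01: "AE \<omega> in M. 0 \<le> g \<omega> \<and> g \<omega> \<le> 1"
    and eq: "\<And>B. B \<in> sets MX \<Longrightarrow> (\<integral>\<omega>. indicator B (X \<omega>) * f (X \<omega>) \<partial>M) = (\<integral>\<omega>. indicator B (X \<omega>) * g \<omega> \<partial>M)"
  shows "AE \<omega> in M. 0 \<le> f (X \<omega>) \<and> f (X \<omega>) \<le> 1"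
proof -
  interpret prob_space M by (rule P)
  have [measurable]: "g \<in> borel_measurable M" using g by (rule borel_measurable_integrable)
  have lo: "AE \<omega> in M. \<not> (- real n < f (X \<omega>) \<and> f (X \<omega>) < 0)" for n :: nat
  proof -
    define B where "B = {x \<in> space MX. - real n < f x \<and> f x < 0}"
    have B[measurable]: "B \<in> sets MX" unfolding B_def by measurable
    have int: "integrable M (\<lambda>\<omega>. indicator B (X \<omega>) * f (X \<omega>))"
      by (rule integrable_const_bound[where B="real n"]) (auto simp: B_def indicator_def)
    have "0 \<le> (\<integral>\<omega>. - (indicator B (X \<omega>) * f (X \<omega>)) \<partial>M)"
      by (rule integral_nonneg_AE) (auto simp: B_def indicator_def)
    moreover have "0 \<le> (\<integral>\<omega>. indicator B (X \<omega>) * g \<omega> \<partial>M)"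
      by (rule integral_nonneg_AE) (use g01 in \<open>auto simp: indicator_def\<close>)
    ultimately have "(\<integral>\<omega>. - (indicator B (X \<omega>) * f (X \<omega>)) \<partial>M) = 0"
      using eq[OF B] by (simp del: mult_minus_right)
    then have "AE \<omega> in M. - (indicator B (X \<omega>) * f (X \<omega>)) = 0"
      using int by (subst (asm) integral_nonneg_eq_0_iff_AE) (auto simp: B_def indicator_def)
    then show ?thesis using AE_space
      by eventually_elim (auto simp: B_def indicator_def measurable_space[OF X] split: if_splits)
  qed
  have hi: "AE \<omega> in M. \<not> (1 < f (X \<omega>) \<and> f (X \<omega>) < real n)" for n :: nat
  proof -
    define B where "B = {x \<in> space MX. 1 < f x \<and> f x < real n}"
    have B[measurable]: "B \<in> sets MX" unfolding B_def by measurable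
    have int: "integrable M (\<lambda>\<omega>. indicator B (X \<omega>) * f (X \<omega>))"
      by (rule integrable_const_bound[where B="real n"]) (auto simp: B_def indicator_def)
    have int2: "integrable M (\<lambda>\<omega>. indicator B (X \<omega>) * g \<omega>)"
      by (rule integrable_ind_mult[OF X B g])
    have "(\<integral>\<omega>. indicator B (X \<omega>) * f (X \<omega>) - indicator B (X \<omega>) * g \<omega> \<partial>M) = 0"
      using eq[OF B] int int2 by simp
    then have "AE \<omega> in M. indicator B (X \<omega>) * f (X \<omega>) - indicator B (X \<omega>) * g \<omega> = 0"
    proof (subst (asm) integral_nonneg_eq_0_iff_AE)
      show "AE \<omega> in M. 0 \<le> indicator B (X \<omega>) * f (X \<omega>) - indicator B (X \<omega>) * g \<omega>"
        using g01 by eventually_elim (auto simp: B_def indicator_def)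
    qed (use int int2 in auto)
    then show ?thesis using g01 AE_space
      by eventually_elim (auto simp: B_def indicator_def measurable_space[OF X] split: if_splits)
  qed
  have "AE \<omega> in M. \<forall>n::nat. \<not> (- real n < f (X \<omega>) \<and> f (X \<omega>) < 0) \<and> \<not> (1 < f (X \<omega>) \<and> f (X \<omega>) < real n)"
    using lo hi by (simp add: AE_all_countable AE_conj_iff)
  then show ?thesis
  proof eventually_elim
    case (elim \<omega>)
    obtain n :: nat where n: "\<bar>f (X \<omega>)\<bar> < real n" using reals_Archimedean2 by blast
    show ?case using elim[rule_format, of n] n by auto
  qed
qed

lemma bounded_mult_integrable:
  fixes f g :: "'a \<Rightarrow> real"
  assumes g: "integrable M g" and f: "f \<in> borel_measurable M" and b: "\<And>\<omega>. \<omega> \<in> space M \<Longrightarrow> \<bar>f \<omega>\<bar> \<le> c"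
  shows "integrable M (\<lambda>\<omega>. f \<omega> * g \<omega>)"
proof (rule Bochner_Integration.integrable_bound[OF integrable_mult_right[OF g, of c]])
  have [measurable]: "g \<in> borel_measurable M" using g by (rule borel_measurable_integrable)
  show "(\<lambda>\<omega>. f \<omega> * g \<omega>) \<in> borel_measurable M" using f by measurable
  show "AE \<omega> in M. norm (f \<omega> * g \<omega>) \<le> norm (c * g \<omega>)"
  proof (rule AE_I2)
    fix \<omega> assume w: "\<omega> \<in> space M"
    have c0: "0 \<le> c" using b[OF w] by linarith
    have "\<bar>f \<omega>\<bar> * \<bar>g \<omega>\<bar> \<le> c * \<bar>g \<omega>\<bar>" using b[OF w] by (rule mult_right_mono) simp
    then show "norm (f \<omega> * g \<omega>) \<le> norm (c * g \<omega>)" using c0 by (simp add: abs_mult)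
  qed
qed

context setting begin

sublocale prob_space M by (rule prob)

lemma e_meas: "t \<in> {1..T} \<Longrightarrow> (\<lambda>h. e t h b) \<in> borel_measurable (hist_space SM t)"
  using propensity[of t] unfolding is_propensity_def
  by (auto intro: measurable_Pair1[where f="\<lambda>(h, a). e t h a", simplified])

lemma H_meas'[measurable]: "t \<in> {1..T} \<Longrightarrow> H t \<in> measurable M (hist_space SM t)"
  by (rule H_meas) auto

lemma A_meas'[measurable]: "t \<in> {1..T} \<Longrightarrow> A t \<in> measurable M (count_space UNIV)"
  by (rule A_meas)

lemma prop_eq: "t \<in> {1..T} \<Longrightarrow> B \<in> sets (hist_space SM t) \<Longrightarrow>
  (\<integral>\<omega>. indicator B (H t \<omega>) * of_bool (A t \<omega> = b) \<partial>M) = (\<integral>\<omega>. indicator B (H t \<omega>) * e t (H t \<omega>) b \<partial>M)"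
  using propensity[of t] unfolding is_propensity_def by auto

lemma e_unit: assumes t: "t \<in> {1..T}" shows "AE \<omega> in M. 0 \<le> e t (H t \<omega>) b \<and> e t (H t \<omega>) b \<le> 1"
proof (rule AE_unit_from_sets[OF prob H_meas'[OF t] e_meas[OF t]])
  show "integrable M (\<lambda>\<omega>. of_bool (A t \<omega> = b) :: real)"
    using t by (intro integrable_const_bound[where B=1]) auto
qed (use prop_eq[OF t] in auto)


lemma e_int: assumes t: "t \<in> {1..T}" shows "integrable M (\<lambda>\<omega>. e t (H t \<omega>) b)"
proof (rule integrable_const_bound[where B=1])
  show "AE \<omega> in M. norm (e t (H t \<omega>) b) \<le> 1" using e_unit[OF t, of b] by eventually_elim auto
  show "(\<lambda>\<omega>. e t (H t \<omega>) b) \<in> borel_measurable M"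
    using e_meas[OF t] H_meas'[OF t] by (rule measurable_compose[rotated])
qed

lemma prop_transfer:
  fixes F :: "'s hist \<Rightarrow> real"
  assumes t: "t \<in> {1..T}" and F[measurable]: "F \<in> borel_measurable (hist_space SM t)"
  shows "integrable M (\<lambda>\<omega>. F (H t \<omega>) * of_bool (A t \<omega> = b)) \<longleftrightarrow> integrable M (\<lambda>\<omega>. F (H t \<omega>) * e t (H t \<omega>) b)"
    and "(\<integral>\<omega>. F (H t \<omega>) * of_bool (A t \<omega> = b) \<partial>M) = (\<integral>\<omega>. F (H t \<omega>) * e t (H t \<omega>) b \<partial>M)"
proof -
  note [measurable] = e_meas[OF t] H_meas'[OF t] A_meas'[OF t]
  define g where "g \<omega> = max 0 (e t (H t \<omega>) b)" for \<omega>
  have [measurable]: "g \<in> borel_measurable M" unfolding g_def by measurable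
  have ge: "AE \<omega> in M. g \<omega> = e t (H t \<omega>) b" using e_unit[OF t, of b] by eventually_elim (auto simp: g_def)
  have gi: "integrable M g" using e_int[OF t] ge by (subst integrable_cong_AE) auto
  have eqm: "distr (density M (\<lambda>\<omega>. ennreal (of_bool (A t \<omega> = b)))) (hist_space SM t) (H t) = distr (density M g) (hist_space SM t) (H t)"
  proof (rule distr_density_eq[OF H_meas'[OF t] _ _ _ _ _ gi, where E="sets (hist_space SM t)"])
    show "integrable M (\<lambda>\<omega>. of_bool (A t \<omega> = b) :: real)"
      by (intro integrable_const_bound[where B=1]) auto
    fix B assume B[measurable]: "B \<in> sets (hist_space SM t)"
    have "(\<integral>\<omega>. indicator B (H t \<omega>) * g \<omega> \<partial>M) = (\<integral>\<omega>. indicator B (H t \<omega>) * e t (H t \<omega>) b \<partial>M)"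
    proof -
      have m1: "(\<lambda>\<omega>. indicator B (H t \<omega>) * g \<omega>) \<in> borel_measurable M" by measurable
      have m2: "(\<lambda>\<omega>. indicator B (H t \<omega>) * e t (H t \<omega>) b) \<in> borel_measurable M" by measurable
      show ?thesis by (rule integral_cong_AE[OF m1 m2]) (use ge in \<open>auto elim!: eventually_mono\<close>)
    qed
    then show "(\<integral>\<omega>. indicator B (H t \<omega>) * of_bool (A t \<omega> = b) \<partial>M) = (\<integral>\<omega>. indicator B (H t \<omega>) * g \<omega> \<partial>M)"
      using prop_eq[OF t B] by simp
  qed (auto simp: g_def sets.sigma_sets_eq Int_stable_def dest: sets.sets_into_space)
  have cong1: "integrable M (\<lambda>\<omega>. F (H t \<omega>) * g \<omega>) \<longleftrightarrow> integrable M (\<lambda>\<omega>. F (H t \<omega>) * e t (H t \<omega>) b)"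
    using ge by (intro integrable_cong_AE) (auto elim!: eventually_mono)
  have cong2: "(\<integral>\<omega>. F (H t \<omega>) * g \<omega> \<partial>M) = (\<integral>\<omega>. F (H t \<omega>) * e t (H t \<omega>) b \<partial>M)"
    using ge by (intro integral_cong_AE) (auto elim!: eventually_mono)
  show "integrable M (\<lambda>\<omega>. F (H t \<omega>) * of_bool (A t \<omega> = b)) \<longleftrightarrow> integrable M (\<lambda>\<omega>. F (H t \<omega>) * e t (H t \<omega>) b)"
    using integral_transfer(1)[OF H_meas'[OF t] _ _ _ _ eqm F] cong1 by (simp add: g_def)
  show "(\<integral>\<omega>. F (H t \<omega>) * of_bool (A t \<omega> = b) \<partial>M) = (\<integral>\<omega>. F (H t \<omega>) * e t (H t \<omega>) b \<partial>M)"
    using integral_transfer(2)[OF H_meas'[OF t] _ _ _ _ eqm F] cong2 by (simp add: g_def)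
qed

abbreviation qc :: "(nat \<Rightarrow> 's hist \<Rightarrow> nat) \<Rightarrow> bool" where
  "qc \<pi> \<equiv> (\<forall>t\<in>{2..T}. \<pi> t \<in> Pcl t)"

definition target :: "(nat \<Rightarrow> 's hist \<Rightarrow> nat) \<Rightarrow> nat \<Rightarrow> 'w \<Rightarrow> real" where
  "target \<pi> t \<omega> = Y t (obs_acts A t \<omega>) \<omega> +
     (if t < T then Qf \<pi> (Suc t) (H (Suc t) \<omega>) (\<pi> (Suc t) (H (Suc t) \<omega>)) else 0)"

lemma cond_reg: "qc \<pi> \<Longrightarrow> t \<in> {1..T} \<Longrightarrow> is_cond_reg M SM S A t (target \<pi> t) (Qf \<pi> t)"
  using Q unfolding is_Q_family_def target_def[abs_def] by blast

lemma Qf_meas: "qc \<pi> \<Longrightarrow> t \<in> {1..T} \<Longrightarrow> (\<lambda>h. Qf \<pi> t h a) \<in> borel_measurable (hist_space SM t)"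
  using cond_reg[of \<pi> t] unfolding is_cond_reg_def
  by (auto intro: measurable_Pair1[where f="\<lambda>(h, a). Qf \<pi> t h a", simplified])

lemma target_int: "qc \<pi> \<Longrightarrow> t \<in> {1..T} \<Longrightarrow> integrable M (target \<pi> t)"
  using cond_reg[of \<pi> t] unfolding is_cond_reg_def by blast

lemma QfA_int: "qc \<pi> \<Longrightarrow> t \<in> {1..T} \<Longrightarrow> integrable M (\<lambda>\<omega>. Qf \<pi> t (H t \<omega>) (A t \<omega>))"
  using cond_reg[of \<pi> t] unfolding is_cond_reg_def by blast

lemma Qfa_int: assumes "qc \<pi>" "t \<in> {1..T}"
  shows "integrable M (\<lambda>\<omega>. of_bool (A t \<omega> = a) * Qf \<pi> t (H t \<omega>) a)"
proof -
  note [measurable] = Qf_meas[OF assms] H_meas'[OF assms(2)] A_meas'[OF assms(2)]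
  show ?thesis
  proof (rule Bochner_Integration.integrable_bound[OF QfA_int[OF assms]])
    show "AE \<omega> in M. norm (of_bool (A t \<omega> = a) * Qf \<pi> t (H t \<omega>) a) \<le> norm (Qf \<pi> t (H t \<omega>) (A t \<omega>))"
      by auto
  qed measurable
qed

lemma cr_eq:
  fixes F :: "'s hist \<Rightarrow> real"
  assumes qc: "qc \<pi>" and t: "t \<in> {1..T}" and F[measurable]: "F \<in> borel_measurable (hist_space SM t)"
    and Fb: "\<And>h. \<bar>F h\<bar> \<le> c"
  shows "(\<integral>\<omega>. F (H t \<omega>) * of_bool (A t \<omega> = a) * target \<pi> t \<omega> \<partial>M)
       = (\<integral>\<omega>. F (H t \<omega>) * of_bool (A t \<omega> = a) * Qf \<pi> t (H t \<omega>) a \<partial>M)"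
proof -
  note [measurable] = Qf_meas[OF qc t] H_meas'[OF t] A_meas'[OF t]
  have ti[measurable]: "target \<pi> t \<in> borel_measurable M"
    using target_int[OF qc t] by (rule borel_measurable_integrable)
  define g where "g \<omega> = of_bool (A t \<omega> = a) * (target \<pi> t \<omega> - Qf \<pi> t (H t \<omega>) a)" for \<omega>
  have i1: "integrable M (\<lambda>\<omega>. of_bool (A t \<omega> = a) * target \<pi> t \<omega>)"
    by (rule Bochner_Integration.integrable_bound[OF target_int[OF qc t]]) auto
  have gi: "integrable M g"
    unfolding g_def right_diff_distrib using i1 Qfa_int[OF qc t] by auto
  have gm[measurable]: "g \<in> borel_measurable M" using gi by (rule borel_measurable_integrable)
  have zero: "(\<integral>\<omega>. indicator B (H t \<omega>) * g \<omega> \<partial>M) = 0" if B: "B \<in> sets (hist_space SM t)" for B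
  proof -
    have eq: "(\<integral>\<omega>. indicator B (H t \<omega>) * of_bool (A t \<omega> = a) * target \<pi> t \<omega> \<partial>M) =
        (\<integral>\<omega>. indicator B (H t \<omega>) * of_bool (A t \<omega> = a) * Qf \<pi> t (H t \<omega>) a \<partial>M)"
      using cond_reg[OF qc t] B unfolding is_cond_reg_def by blast
    have j1: "integrable M (\<lambda>\<omega>. indicator B (H t \<omega>) * (of_bool (A t \<omega> = a) * target \<pi> t \<omega>))"
      by (rule integrable_ind_mult[OF H_meas'[OF t] B i1])
    have j2: "integrable M (\<lambda>\<omega>. indicator B (H t \<omega>) * (of_bool (A t \<omega> = a) * Qf \<pi> t (H t \<omega>) a))"
      by (rule integrable_ind_mult[OF H_meas'[OF t] B Qfa_int[OF qc t]])
    have "(\<integral>\<omega>. indicator B (H t \<omega>) * g \<omega> \<partial>M) =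
      (\<integral>\<omega>. indicator B (H t \<omega>) * (of_bool (A t \<omega> = a) * target \<pi> t \<omega>) -
            indicator B (H t \<omega>) * (of_bool (A t \<omega> = a) * Qf \<pi> t (H t \<omega>) a) \<partial>M)"
      by (simp add: g_def algebra_simps)
    also have "\<dots> = 0" using eq j1 j2 by (simp add: mult.assoc)
    finally show ?thesis .
  qed
  have Fg: "integrable M (\<lambda>\<omega>. F (H t \<omega>) * g \<omega>)"
    by (rule bounded_mult_integrable[OF gi _ Fb]) measurable
  have "(\<integral>\<omega>. F (H t \<omega>) * g \<omega> \<partial>M) = 0"
    by (rule cr_transfer[OF H_meas'[OF t] gi zero F Fg])
  moreover have "integrable M (\<lambda>\<omega>. F (H t \<omega>) * (of_bool (A t \<omega> = a) * target \<pi> t \<omega>))"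
    by (rule bounded_mult_integrable[OF i1 _ Fb]) measurable
  moreover have "integrable M (\<lambda>\<omega>. F (H t \<omega>) * (of_bool (A t \<omega> = a) * Qf \<pi> t (H t \<omega>) a))"
    by (rule bounded_mult_integrable[OF Qfa_int[OF qc t] _ Fb]) measurable
  ultimately show ?thesis by (simp add: g_def right_diff_distrib mult.assoc)
qed

end

context setting begin

lemma ind_A_meas: "t \<in> {1..T} \<Longrightarrow> (\<lambda>\<omega>. indicator {b} (A t \<omega>) :: real) \<in> borel_measurable M"
proof -
  assume t: "t \<in> {1..T}"
  have "(\<lambda>x::nat. indicator {b} x :: real) \<in> borel_measurable (count_space UNIV)" by simp
  then show ?thesis using A_meas'[OF t] by (rule measurable_compose[rotated])
qed

abbreviation FH :: "nat \<Rightarrow> 'w measure" where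
  "FH t \<equiv> vimage_algebra (space M) (H t) (hist_space SM t)"

lemma FH_sub: assumes t: "t \<in> {1..T}" shows "sigma_finite_subalgebra M (FH t)"
proof -
  have "finite_measure_subalgebra M (FH t)"
  proof (unfold_locales)
    show "subalgebra M (FH t)"
      unfolding subalgebra_def
      using H_meas'[OF t] by (auto simp: sets_vimage_algebra2 measurable_def)
  qed
  then show ?thesis by (rule finite_measure_subalgebra_is_sigma_finite)
qed

lemma FH_meas: assumes t: "t \<in> {1..T}" and G: "G \<in> borel_measurable (hist_space SM t)"
  shows "(\<lambda>\<omega>. G (H t \<omega>)) \<in> borel_measurable (FH t)"
proof -
  have "H t \<in> measurable (FH t) (hist_space SM t)"
    by (rule measurable_vimage_algebra1) (use H_meas'[OF t] in \<open>auto simp: measurable_def\<close>)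
  then show ?thesis using G by (rule measurable_compose)
qed

lemma CE_A: assumes t: "t \<in> {1..T}"
  shows "AE \<omega> in M. real_cond_exp M (FH t) (\<lambda>\<omega>. indicator {b} (A t \<omega>)) \<omega> = e t (H t \<omega>) b"
proof -
  interpret sigma_finite_subalgebra M "FH t" by (rule FH_sub[OF t])
  note [measurable] = H_meas'[OF t] A_meas'[OF t] e_meas[OF t] ind_A_meas[OF t]
  show ?thesis
  proof (rule real_cond_exp_charact)
    fix C assume "C \<in> sets (FH t)"
    then obtain B where B[measurable]: "B \<in> sets (hist_space SM t)" and C: "C = H t -` B \<inter> space M"
      using H_meas'[OF t] by (auto simp: sets_vimage_algebra2 measurable_def)
    have "(\<integral>\<omega>\<in>C. (indicator {b} (A t \<omega>) :: real) \<partial>M) = (\<integral>\<omega>. indicator B (H t \<omega>) * of_bool (A t \<omega> = b) \<partial>M)"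
      unfolding C set_lebesgue_integral_def
      by (intro Bochner_Integration.integral_cong) (auto simp: indicator_def)
    also have "\<dots> = (\<integral>\<omega>. indicator B (H t \<omega>) * e t (H t \<omega>) b \<partial>M)"
      by (rule prop_eq[OF t B])
    also have "\<dots> = (\<integral>\<omega>\<in>C. e t (H t \<omega>) b \<partial>M)"
      unfolding C set_lebesgue_integral_def
      by (intro Bochner_Integration.integral_cong) (auto simp: indicator_def)
    finally show "(\<integral>\<omega>\<in>C. (indicator {b} (A t \<omega>) :: real) \<partial>M) = (\<integral>\<omega>\<in>C. e t (H t \<omega>) b \<partial>M)" .
  next
    show "integrable M (\<lambda>\<omega>. indicator {b} (A t \<omega>) :: real)"
      by (intro integrable_const_bound[where B=1]) auto
    show "integrable M (\<lambda>\<omega>. e t (H t \<omega>) b)" by (rule e_int[OF t])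
    show "(\<lambda>\<omega>. e t (H t \<omega>) b) \<in> borel_measurable (FH t)" by (rule FH_meas[OF t e_meas[OF t]])
  qed
qed

definition MZ :: "nat \<Rightarrow> ((nat \<Rightarrow> real) \<times> (nat \<Rightarrow> 's)) measure" where
  "MZ t = (\<Pi>\<^sub>M s\<in>{t..T}. (borel :: real measure)) \<Otimes>\<^sub>M (\<Pi>\<^sub>M s\<in>{Suc t..T}. SM)"

definition Zp :: "nat \<Rightarrow> nat list \<Rightarrow> 'w \<Rightarrow> (nat \<Rightarrow> real) \<times> (nat \<Rightarrow> 's)" where
  "Zp t a \<omega> = (restrict (\<lambda>s. Y s (take s a) \<omega>) {t..T}, restrict (\<lambda>s. S s (take (s - 1) a) \<omega>) {Suc t..T})"

lemma Zp_meas: assumes t: "t \<in> {1..T}" and a: "a \<in> act_seqs d T"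
  shows "Zp t a \<in> measurable M (MZ t)"
  unfolding Zp_def MZ_def
proof (intro measurable_Pair measurable_restrict)
  fix s assume s: "s \<in> {t..T}"
  have "take s a \<in> act_seqs d s" using s a by (intro take_act_seqs) auto
  then show "(\<lambda>\<omega>. Y s (take s a) \<omega>) \<in> borel_measurable M"
    using s t by (intro borel_measurable_integrable Y_int) auto
next
  fix s assume s: "s \<in> {Suc t..T}"
  have "take (s - 1) a \<in> act_seqs d (s - 1)" using s a by (intro take_act_seqs) auto
  then show "(\<lambda>\<omega>. S s (take (s - 1) a) \<omega>) \<in> measurable M SM"
    using s t by (intro S_meas) auto
qed

lemma ign_CE: assumes t: "t \<in> {1..T}" and a: "a \<in> act_seqs d T" and C: "C \<in> sets (MZ t)"
  shows "AE \<omega> in M. real_cond_exp M (FH t) (\<lambda>\<omega>. indicator C (Zp t a \<omega>) * indicator {b} (A t \<omega>)) \<omega> =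
        real_cond_exp M (FH t) (\<lambda>\<omega>. indicator C (Zp t a \<omega>)) \<omega> *
        real_cond_exp M (FH t) (\<lambda>\<omega>. indicator {b} (A t \<omega>)) \<omega>"
  using ignorability t a C unfolding seq_ignorability_def cond_indep_def MZ_def Zp_def[abs_def]
  by auto

lemma ign_rect: assumes t: "t \<in> {1..T}" and a: "a \<in> act_seqs d T"
    and B: "B \<in> sets (hist_space SM t)" and C: "C \<in> sets (MZ t)"
  shows "(\<integral>\<omega>. indicator B (H t \<omega>) * indicator C (Zp t a \<omega>) * of_bool (A t \<omega> = b) \<partial>M)
       = (\<integral>\<omega>. indicator B (H t \<omega>) * indicator C (Zp t a \<omega>) * e t (H t \<omega>) b \<partial>M)"
proof -
  interpret sigma_finite_subalgebra M "FH t" by (rule FH_sub[OF t])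
  note [measurable] = H_meas'[OF t] A_meas'[OF t] e_meas[OF t] ind_A_meas[OF t] Zp_meas[OF t a] B C
  let ?g = "\<lambda>\<omega>. indicator C (Zp t a \<omega>) * indicator {b} (A t \<omega>) :: real"
  let ?gc = "\<lambda>\<omega>. indicator C (Zp t a \<omega>) :: real"
  let ?ga = "\<lambda>\<omega>. indicator {b} (A t \<omega>) :: real"
  have fB: "(\<lambda>\<omega>. indicator B (H t \<omega>) :: real) \<in> borel_measurable (FH t)"
    by (rule FH_meas[OF t]) measurable
  have fBe: "(\<lambda>\<omega>. indicator B (H t \<omega>) * e t (H t \<omega>) b) \<in> borel_measurable (FH t)"
    by (rule FH_meas[OF t]) measurable
  have "(\<integral>\<omega>. indicator B (H t \<omega>) * indicator C (Zp t a \<omega>) * of_bool (A t \<omega> = b) \<partial>M)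
      = (\<integral>\<omega>. indicator B (H t \<omega>) * ?g \<omega> \<partial>M)"
    by (intro Bochner_Integration.integral_cong) (auto simp: indicator_def)
  also have "\<dots> = (\<integral>\<omega>. indicator B (H t \<omega>) * real_cond_exp M (FH t) ?g \<omega> \<partial>M)"
  proof (rule real_cond_exp_intg(2)[symmetric, OF _ fB])
    show "integrable M (\<lambda>\<omega>. indicator B (H t \<omega>) * ?g \<omega>)"
      by (intro integrable_const_bound[where B=1]) (auto simp: indicator_def)
  qed measurable
  also have "\<dots> = (\<integral>\<omega>. indicator B (H t \<omega>) * (real_cond_exp M (FH t) ?gc \<omega> * e t (H t \<omega>) b) \<partial>M)"
  proof (rule integral_cong_AE)
    show "AE \<omega> in M. indicator B (H t \<omega>) * real_cond_exp M (FH t) ?g \<omega> =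
        indicator B (H t \<omega>) * (real_cond_exp M (FH t) ?gc \<omega> * e t (H t \<omega>) b)"
      using ign_CE[OF t a C, of b] CE_A[OF t, of b] by eventually_elim simp
  qed measurable
  also have "\<dots> = (\<integral>\<omega>. (indicator B (H t \<omega>) * e t (H t \<omega>) b) * real_cond_exp M (FH t) ?gc \<omega> \<partial>M)"
    by (simp add: ac_simps)
  also have "\<dots> = (\<integral>\<omega>. (indicator B (H t \<omega>) * e t (H t \<omega>) b) * ?gc \<omega> \<partial>M)"
  proof (rule real_cond_exp_intg(2)[OF _ fBe])
    show "integrable M (\<lambda>\<omega>. (indicator B (H t \<omega>) * e t (H t \<omega>) b) * ?gc \<omega>)"
    proof (rule integrable_const_bound[where B=1])
      show "AE \<omega> in M. norm (indicator B (H t \<omega>) * e t (H t \<omega>) b * ?gc \<omega>) \<le> 1"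
        using e_unit[OF t, of b] by eventually_elim (auto simp: indicator_def)
    qed measurable
  qed measurable
  also have "\<dots> = (\<integral>\<omega>. indicator B (H t \<omega>) * indicator C (Zp t a \<omega>) * e t (H t \<omega>) b \<partial>M)"
    by (simp add: ac_simps)
  finally show ?thesis .
qed


lemma ign_transfer:
  fixes K :: "'s hist \<times> ((nat \<Rightarrow> real) \<times> (nat \<Rightarrow> 's)) \<Rightarrow> real"
  assumes t: "t \<in> {1..T}" and a: "a \<in> act_seqs d T"
    and K[measurable]: "K \<in> borel_measurable (hist_space SM t \<Otimes>\<^sub>M MZ t)"
  shows "integrable M (\<lambda>\<omega>. K (H t \<omega>, Zp t a \<omega>) * of_bool (A t \<omega> = b)) \<longleftrightarrow>
         integrable M (\<lambda>\<omega>. K (H t \<omega>, Zp t a \<omega>) * e t (H t \<omega>) b)"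
    and "(\<integral>\<omega>. K (H t \<omega>, Zp t a \<omega>) * of_bool (A t \<omega> = b) \<partial>M) =
         (\<integral>\<omega>. K (H t \<omega>, Zp t a \<omega>) * e t (H t \<omega>) b \<partial>M)"
proof -
  note [measurable] = e_meas[OF t] H_meas'[OF t] A_meas'[OF t] Zp_meas[OF t a]
  define X where "X \<omega> = (H t \<omega>, Zp t a \<omega>)" for \<omega>
  have X[measurable]: "X \<in> measurable M (hist_space SM t \<Otimes>\<^sub>M MZ t)"
    unfolding X_def by measurable
  define g where "g \<omega> = max 0 (e t (H t \<omega>) b)" for \<omega>
  have [measurable]: "g \<in> borel_measurable M" unfolding g_def by measurable
  have ge: "AE \<omega> in M. g \<omega> = e t (H t \<omega>) b" using e_unit[OF t, of b] by eventually_elim (auto simp: g_def)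
  have gi: "integrable M g" using e_int[OF t] ge by (subst integrable_cong_AE) auto
  have eqm: "distr (density M (\<lambda>\<omega>. ennreal (of_bool (A t \<omega> = b)))) (hist_space SM t \<Otimes>\<^sub>M MZ t) X
      = distr (density M g) (hist_space SM t \<Otimes>\<^sub>M MZ t) X"
  proof (rule distr_density_eq[OF X _ _ _ _ _ gi,
        where E="{B \<times> C | B C. B \<in> sets (hist_space SM t) \<and> C \<in> sets (MZ t)}"])
    show "integrable M (\<lambda>\<omega>. of_bool (A t \<omega> = b) :: real)"
      by (intro integrable_const_bound[where B=1]) auto
    fix R assume "R \<in> {B \<times> C | B C. B \<in> sets (hist_space SM t) \<and> C \<in> sets (MZ t)}"
    then obtain B C where R: "R = B \<times> C" and B[measurable]: "B \<in> sets (hist_space SM t)"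
      and C[measurable]: "C \<in> sets (MZ t)" by auto
    have m1: "(\<lambda>\<omega>. indicator B (H t \<omega>) * indicator C (Zp t a \<omega>) * g \<omega>) \<in> borel_measurable M" by measurable
    have m2: "(\<lambda>\<omega>. indicator B (H t \<omega>) * indicator C (Zp t a \<omega>) * e t (H t \<omega>) b) \<in> borel_measurable M" by measurable
    have "(\<integral>\<omega>. indicator B (H t \<omega>) * indicator C (Zp t a \<omega>) * g \<omega> \<partial>M) =
        (\<integral>\<omega>. indicator B (H t \<omega>) * indicator C (Zp t a \<omega>) * e t (H t \<omega>) b \<partial>M)"
      by (rule integral_cong_AE[OF m1 m2]) (use ge in \<open>auto elim!: eventually_mono\<close>)
    then show "(\<integral>\<omega>. indicator R (X \<omega>) * of_bool (A t \<omega> = b) \<partial>M) = (\<integral>\<omega>. indicator R (X \<omega>) * g \<omega> \<partial>M)"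
      using ign_rect[OF t a B C, of b] by (simp add: R X_def indicator_times)
  next
    show "sets (hist_space SM t \<Otimes>\<^sub>M MZ t) = sigma_sets (space (hist_space SM t \<Otimes>\<^sub>M MZ t))
        {B \<times> C | B C. B \<in> sets (hist_space SM t) \<and> C \<in> sets (MZ t)}"
      by (simp add: sets_pair_measure space_pair_measure)
    show "{B \<times> C | B C. B \<in> sets (hist_space SM t) \<and> C \<in> sets (MZ t)} \<subseteq> Pow (space (hist_space SM t \<Otimes>\<^sub>M MZ t))"
      using pair_measure_closed by (simp add: space_pair_measure)
    show "Int_stable {B \<times> C | B C. B \<in> sets (hist_space SM t) \<and> C \<in> sets (MZ t)}"
      by (rule Int_stable_pair_measure_generator)
    show "space (hist_space SM t \<Otimes>\<^sub>M MZ t) \<in> {B \<times> C | B C. B \<in> sets (hist_space SM t) \<and> C \<in> sets (MZ t)}"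
      by (auto simp: space_pair_measure)
  qed (auto simp: g_def)
  have cong1: "integrable M (\<lambda>\<omega>. K (X \<omega>) * g \<omega>) \<longleftrightarrow> integrable M (\<lambda>\<omega>. K (H t \<omega>, Zp t a \<omega>) * e t (H t \<omega>) b)"
    unfolding X_def using ge by (intro integrable_cong_AE) (auto elim!: eventually_mono)
  have m1: "(\<lambda>\<omega>. K (X \<omega>) * g \<omega>) \<in> borel_measurable M" by measurable
  have m2: "(\<lambda>\<omega>. K (H t \<omega>, Zp t a \<omega>) * e t (H t \<omega>) b) \<in> borel_measurable M" by measurable
  have cong2: "(\<integral>\<omega>. K (X \<omega>) * g \<omega> \<partial>M) = (\<integral>\<omega>. K (H t \<omega>, Zp t a \<omega>) * e t (H t \<omega>) b \<partial>M)"
    by (rule integral_cong_AE[OF m1 m2]) (use ge in \<open>auto simp: X_def elim!: eventually_mono\<close>)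
  show "integrable M (\<lambda>\<omega>. K (H t \<omega>, Zp t a \<omega>) * of_bool (A t \<omega> = b)) \<longleftrightarrow>
         integrable M (\<lambda>\<omega>. K (H t \<omega>, Zp t a \<omega>) * e t (H t \<omega>) b)"
    using integral_transfer(1)[OF X _ _ _ _ eqm K] cong1 by (simp add: g_def X_def)
  show "(\<integral>\<omega>. K (H t \<omega>, Zp t a \<omega>) * of_bool (A t \<omega> = b) \<partial>M) =
         (\<integral>\<omega>. K (H t \<omega>, Zp t a \<omega>) * e t (H t \<omega>) b \<partial>M)"
    using integral_transfer(2)[OF X _ _ _ _ eqm K] cong2 by (simp add: g_def X_def)
qed

end

lemma sum_of_bool_sel:
  fixes f :: "nat \<Rightarrow> real"
  assumes "x < n"
  shows "(\<Sum>b<n. of_bool (x = b) * f b) = f x"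
proof -
  have "(\<Sum>b<n. of_bool (x = b) * f b) = (\<Sum>b\<in>{..<n}. if b = x then f b else 0)"
    by (intro sum.cong) auto
  also have "\<dots> = f x" using assms by (subst sum.delta) auto
  finally show ?thesis .
qed

context setting begin

definition wgt :: "nat \<Rightarrow> ('s hist \<Rightarrow> nat) \<Rightarrow> 's hist \<Rightarrow> nat \<Rightarrow> real" where
  "wgt t \<rho> h b = of_bool (\<rho> h = b \<and> \<eta> \<le> e t h b) / e t h b"

lemma wgt_nonneg: "0 \<le> wgt t \<rho> h b"
  using eta by (auto simp: wgt_def)

lemma wgt_le: "wgt t \<rho> h b \<le> 1 / \<eta>"
  using eta by (auto simp: wgt_def divide_simps)

lemma wgt_abs: "\<bar>wgt t \<rho> h b\<bar> \<le> 1 / \<eta>"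
  using wgt_nonneg wgt_le by (simp add: abs_of_nonneg)

lemma Pcl_meas: "t \<in> {1..T} \<Longrightarrow> \<rho> \<in> Pcl t \<Longrightarrow> \<rho> \<in> measurable (hist_space SM t) (count_space UNIV)"
  using Pi_meas by blast

lemma wgt_meas: assumes t: "t \<in> {1..T}" and \<rho>: "\<rho> \<in> Pcl t"
  shows "(\<lambda>h. wgt t \<rho> h b) \<in> borel_measurable (hist_space SM t)"
proof -
  note [measurable] = e_meas[OF t] Pcl_meas[OF t \<rho>]
  show ?thesis unfolding wgt_def by measurable
qed

lemma overlap_rho: assumes t: "t \<in> {1..T}" and \<rho>: "\<rho> \<in> Pcl t"
  shows "AE \<omega> in M. \<eta> \<le> e t (H t \<omega>) (\<rho> (H t \<omega>))"
  using overlap[OF t] by eventually_elim (use \<rho> in blast)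

lemma ipw:
  fixes G :: "'s hist \<Rightarrow> real"
  assumes t: "t \<in> {1..T}" and \<rho>: "\<rho> \<in> Pcl t" and G[measurable]: "G \<in> borel_measurable (hist_space SM t)"
  shows "integrable M (\<lambda>\<omega>. G (H t \<omega>) * wgt t \<rho> (H t \<omega>) b * of_bool (A t \<omega> = b)) \<longleftrightarrow>
         integrable M (\<lambda>\<omega>. G (H t \<omega>) * of_bool (\<rho> (H t \<omega>) = b))"
    and "(\<integral>\<omega>. G (H t \<omega>) * wgt t \<rho> (H t \<omega>) b * of_bool (A t \<omega> = b) \<partial>M) =
         (\<integral>\<omega>. G (H t \<omega>) * of_bool (\<rho> (H t \<omega>) = b) \<partial>M)"
proof -
  note [measurable] = e_meas[OF t] Pcl_meas[OF t \<rho>] wgt_meas[OF t \<rho>] H_meas'[OF t]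
  have F: "(\<lambda>h. G h * wgt t \<rho> h b) \<in> borel_measurable (hist_space SM t)" by measurable
  have ae: "AE \<omega> in M. G (H t \<omega>) * wgt t \<rho> (H t \<omega>) b * e t (H t \<omega>) b = G (H t \<omega>) * of_bool (\<rho> (H t \<omega>) = b)"
    using overlap_rho[OF t \<rho>] by eventually_elim (use eta in \<open>auto simp: wgt_def\<close>)
  have m1: "(\<lambda>\<omega>. G (H t \<omega>) * wgt t \<rho> (H t \<omega>) b * e t (H t \<omega>) b) \<in> borel_measurable M" by measurable
  have m2: "(\<lambda>\<omega>. G (H t \<omega>) * of_bool (\<rho> (H t \<omega>) = b)) \<in> borel_measurable M" by measurable
  show "integrable M (\<lambda>\<omega>. G (H t \<omega>) * wgt t \<rho> (H t \<omega>) b * of_bool (A t \<omega> = b)) \<longleftrightarrow>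
         integrable M (\<lambda>\<omega>. G (H t \<omega>) * of_bool (\<rho> (H t \<omega>) = b))"
    using prop_transfer(1)[OF t F, of b] integrable_cong_AE[OF m1 m2 ae] by simp
  show "(\<integral>\<omega>. G (H t \<omega>) * wgt t \<rho> (H t \<omega>) b * of_bool (A t \<omega> = b) \<partial>M) =
         (\<integral>\<omega>. G (H t \<omega>) * of_bool (\<rho> (H t \<omega>) = b) \<partial>M)"
    using prop_transfer(2)[OF t F, of b] integral_cong_AE[OF m1 m2 ae] by simp
qed

lemma Qf_rho_b_int: assumes qc: "qc \<pi>" and t: "t \<in> {1..T}" and \<rho>: "\<rho> \<in> Pcl t"
  shows "integrable M (\<lambda>\<omega>. Qf \<pi> t (H t \<omega>) b * of_bool (\<rho> (H t \<omega>) = b))"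
proof -
  note [measurable] = e_meas[OF t] Pcl_meas[OF t \<rho>] wgt_meas[OF t \<rho>] H_meas'[OF t] Qf_meas[OF qc t] A_meas'[OF t]
  have "integrable M (\<lambda>\<omega>. wgt t \<rho> (H t \<omega>) b * (of_bool (A t \<omega> = b) * Qf \<pi> t (H t \<omega>) b))"
    by (rule bounded_mult_integrable[OF Qfa_int[OF qc t] _ wgt_abs]) measurable
  then have "integrable M (\<lambda>\<omega>. Qf \<pi> t (H t \<omega>) b * wgt t \<rho> (H t \<omega>) b * of_bool (A t \<omega> = b))"
    by (simp add: ac_simps)
  then show ?thesis using ipw(1)[OF t \<rho>, of "\<lambda>h. Qf \<pi> t h b" b] by simp
qed

lemma Qf_rho_int: assumes qc: "qc \<pi>" and t: "t \<in> {1..T}" and \<rho>: "\<rho> \<in> Pcl t"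
  shows "integrable M (\<lambda>\<omega>. Qf \<pi> t (H t \<omega>) (\<rho> (H t \<omega>)))"
proof -
  have "integrable M (\<lambda>\<omega>. \<Sum>b<d t. Qf \<pi> t (H t \<omega>) b * of_bool (\<rho> (H t \<omega>) = b))"
    by (intro Bochner_Integration.integrable_sum) (rule Qf_rho_b_int[OF qc t \<rho>])
  moreover have "(\<Sum>b<d t. Qf \<pi> t (H t \<omega>) b * of_bool (\<rho> (H t \<omega>) = b)) = Qf \<pi> t (H t \<omega>) (\<rho> (H t \<omega>))" for \<omega>
    using sum_of_bool_sel[OF Pi_range[OF t \<rho>], where f="\<lambda>b. Qf \<pi> t (H t \<omega>) b"] by (simp add: ac_simps)
  ultimately show ?thesis by simp
qed

lemma transfer_AE:
  assumes t: "t \<in> {1..T}" and \<rho>: "\<rho> \<in> Pcl t"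
    and P: "\<And>b. {h \<in> space (hist_space SM t). P h b} \<in> sets (hist_space SM t)"
    and ae: "AE \<omega> in M. P (H t \<omega>) (A t \<omega>)"
  shows "AE \<omega> in M. P (H t \<omega>) (\<rho> (H t \<omega>))"
proof -
  note [measurable] = e_meas[OF t] Pcl_meas[OF t \<rho>] wgt_meas[OF t \<rho>] H_meas'[OF t] A_meas'[OF t]
  have one: "AE \<omega> in M. \<not> (\<rho> (H t \<omega>) = b \<and> \<not> P (H t \<omega>) b)" for b
  proof -
    define B where "B = {h \<in> space (hist_space SM t). \<rho> h = b} \<inter> (space (hist_space SM t) - {h \<in> space (hist_space SM t). P h b})"
    have B[measurable]: "B \<in> sets (hist_space SM t)" unfolding B_def using P[of b] by measurable
    have z: "AE \<omega> in M. indicator B (H t \<omega>) * wgt t \<rho> (H t \<omega>) b * of_bool (A t \<omega> = b) = 0"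
      using ae by eventually_elim (auto simp: B_def)
    have "(\<integral>\<omega>. (indicator B (H t \<omega>) :: real) * of_bool (\<rho> (H t \<omega>) = b) \<partial>M) = 0"
      using ipw(2)[OF t \<rho>, of "indicator B" b] integral_cong_AE[OF _ _ z] by simp
    then have "AE \<omega> in M. indicator B (H t \<omega>) * of_bool (\<rho> (H t \<omega>) = b) = (0::real)"
      by (subst (asm) integral_nonneg_eq_0_iff_AE)
         (auto intro!: integrable_const_bound[where B=1])
    then show ?thesis using AE_space
      by eventually_elim (auto simp: B_def indicator_def measurable_space[OF H_meas'[OF t]] split: if_splits)
  qed
  have "AE \<omega> in M. \<forall>b. \<not> (\<rho> (H t \<omega>) = b \<and> \<not> P (H t \<omega>) b)"
    unfolding AE_all_countable using one by blast
  then show ?thesis by eventually_elim auto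
qed


lemma compare_reg:
  assumes qc: "qc \<pi>" and qc': "qc \<pi>'" and t: "t \<in> {1..T}"
    and le: "AE \<omega> in M. target \<pi> t \<omega> \<le> target \<pi>' t \<omega>"
  shows "AE \<omega> in M. Qf \<pi> t (H t \<omega>) (A t \<omega>) \<le> Qf \<pi>' t (H t \<omega>) (A t \<omega>)"
proof -
  note [measurable] = H_meas'[OF t] A_meas'[OF t] Qf_meas[OF qc t] Qf_meas[OF qc' t]
  have tm[measurable]: "target \<pi> t \<in> borel_measurable M" "target \<pi>' t \<in> borel_measurable M"
    using target_int[OF qc t] target_int[OF qc' t] by (auto intro: borel_measurable_integrable)
  have one: "AE \<omega> in M. \<not> (Qf \<pi>' t (H t \<omega>) a < Qf \<pi> t (H t \<omega>) a \<and> A t \<omega> = a)" for a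
  proof -
    define B where "B = {h \<in> space (hist_space SM t). Qf \<pi>' t h a < Qf \<pi> t h a}"
    have B[measurable]: "B \<in> sets (hist_space SM t)" unfolding B_def by measurable
    have Fb: "\<bar>indicator B h :: real\<bar> \<le> 1" for h by (auto simp: indicator_def)
    have e1: "(\<integral>\<omega>. indicator B (H t \<omega>) * of_bool (A t \<omega> = a) * target \<pi> t \<omega> \<partial>M)
       = (\<integral>\<omega>. indicator B (H t \<omega>) * of_bool (A t \<omega> = a) * Qf \<pi> t (H t \<omega>) a \<partial>M)"
      by (rule cr_eq[OF qc t _ Fb]) measurable
    have e2: "(\<integral>\<omega>. indicator B (H t \<omega>) * of_bool (A t \<omega> = a) * target \<pi>' t \<omega> \<partial>M)
       = (\<integral>\<omega>. indicator B (H t \<omega>) * of_bool (A t \<omega> = a) * Qf \<pi>' t (H t \<omega>) a \<partial>M)"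
      by (rule cr_eq[OF qc' t _ Fb]) measurable
    have i1: "integrable M (\<lambda>\<omega>. indicator B (H t \<omega>) * of_bool (A t \<omega> = a) * Qf \<pi> t (H t \<omega>) a)"
      using bounded_mult_integrable[OF Qfa_int[OF qc t, of a], of "\<lambda>\<omega>. indicator B (H t \<omega>)" 1]
      by (simp add: mult.assoc indicator_def)
    have i2: "integrable M (\<lambda>\<omega>. indicator B (H t \<omega>) * of_bool (A t \<omega> = a) * Qf \<pi>' t (H t \<omega>) a)"
      using bounded_mult_integrable[OF Qfa_int[OF qc' t, of a], of "\<lambda>\<omega>. indicator B (H t \<omega>)" 1]
      by (simp add: mult.assoc indicator_def)
    have j1: "integrable M (\<lambda>\<omega>. indicator B (H t \<omega>) * of_bool (A t \<omega> = a) * target \<pi> t \<omega>)"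
      using bounded_mult_integrable[OF target_int[OF qc t], of "\<lambda>\<omega>. indicator B (H t \<omega>) * of_bool (A t \<omega> = a)" 1]
      by (simp add: indicator_def)
    have j2: "integrable M (\<lambda>\<omega>. indicator B (H t \<omega>) * of_bool (A t \<omega> = a) * target \<pi>' t \<omega>)"
      using bounded_mult_integrable[OF target_int[OF qc' t], of "\<lambda>\<omega>. indicator B (H t \<omega>) * of_bool (A t \<omega> = a)" 1]
      by (simp add: indicator_def)
    let ?D = "\<lambda>\<omega>. indicator B (H t \<omega>) * of_bool (A t \<omega> = a) * Qf \<pi> t (H t \<omega>) a -
                 indicator B (H t \<omega>) * of_bool (A t \<omega> = a) * Qf \<pi>' t (H t \<omega>) a"
    have Dnn: "AE \<omega> in M. 0 \<le> ?D \<omega>"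
      by (rule AE_I2) (auto simp: B_def indicator_def)
    have "(\<integral>\<omega>. ?D \<omega> \<partial>M) = (\<integral>\<omega>. indicator B (H t \<omega>) * of_bool (A t \<omega> = a) * target \<pi> t \<omega> -
                 indicator B (H t \<omega>) * of_bool (A t \<omega> = a) * target \<pi>' t \<omega> \<partial>M)"
      using e1 e2 i1 i2 j1 j2 by simp
    also have "\<dots> \<le> (\<integral>\<omega>. 0 \<partial>M)"
    proof (rule integral_mono_AE)
      show "AE \<omega> in M. indicator B (H t \<omega>) * of_bool (A t \<omega> = a) * target \<pi> t \<omega> -
                 indicator B (H t \<omega>) * of_bool (A t \<omega> = a) * target \<pi>' t \<omega> \<le> 0"
        using le by eventually_elim (auto simp: indicator_def)
    qed (use j1 j2 in auto)
    also have "\<dots> = 0" by simp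
    finally have "(\<integral>\<omega>. ?D \<omega> \<partial>M) = 0"
      using integral_nonneg_AE[OF Dnn] by linarith
    then have "AE \<omega> in M. ?D \<omega> = 0"
      using i1 i2 Dnn by (subst (asm) integral_nonneg_eq_0_iff_AE) auto
    then show ?thesis using AE_space
      by eventually_elim (auto simp: B_def indicator_def measurable_space[OF H_meas'[OF t]] split: if_splits)
  qed
  have "AE \<omega> in M. \<forall>a. \<not> (Qf \<pi>' t (H t \<omega>) a < Qf \<pi> t (H t \<omega>) a \<and> A t \<omega> = a)"
    unfolding AE_all_countable using one by blast
  then show ?thesis by eventually_elim (auto simp: not_less)
qed

end

lemma backward_induct:
  assumes "t \<in> {1..T}" "P T" "\<And>t. t \<in> {1..<T} \<Longrightarrow> P (Suc t) \<Longrightarrow> P t"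
  shows "P t"
proof -
  have "\<forall>t. T - t = k \<longrightarrow> t \<in> {1..T} \<longrightarrow> P t" for k
  proof (induction k)
    case 0
    then show ?case using assms(2) by auto
  next
    case (Suc k)
    show ?case
    proof (intro allI impI)
      fix t assume "T - t = Suc k" "t \<in> {1..T}"
      then have "t \<in> {1..<T}" "T - Suc t = k" "Suc t \<in> {1..T}" by auto
      then show "P t" using Suc.IH assms(3) by blast
    qed
  qed
  then show ?thesis using assms(1) by blast
qed

context setting begin

abbreviation U :: "(nat \<Rightarrow> 's hist \<Rightarrow> nat) \<Rightarrow> nat \<Rightarrow> 'w \<Rightarrow> real" where
  "U \<pi> t \<omega> \<equiv> Qf \<pi> t (H t \<omega>) (\<pi> t (H t \<omega>))"

lemma lift_le:
  assumes qc: "qc \<pi>" and qc': "qc \<pi>'" and t: "t \<in> {1..T}" and \<rho>: "\<rho> \<in> Pcl t"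
    and le: "AE \<omega> in M. Qf \<pi> t (H t \<omega>) (A t \<omega>) \<le> Qf \<pi>' t (H t \<omega>) (A t \<omega>)"
  shows "AE \<omega> in M. Qf \<pi> t (H t \<omega>) (\<rho> (H t \<omega>)) \<le> Qf \<pi>' t (H t \<omega>) (\<rho> (H t \<omega>))"
proof (rule transfer_AE[OF t \<rho>, where P="\<lambda>h b. Qf \<pi> t h b \<le> Qf \<pi>' t h b"])
  fix b
  note [measurable] = Qf_meas[OF qc t] Qf_meas[OF qc' t]
  show "{h \<in> space (hist_space SM t). Qf \<pi> t h b \<le> Qf \<pi>' t h b} \<in> sets (hist_space SM t)"
    by measurable
qed (rule le)

lemma lift_eq:
  assumes qc: "qc \<pi>" and qc': "qc \<pi>'" and t: "t \<in> {1..T}" and \<rho>: "\<rho> \<in> Pcl t"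
    and eq: "AE \<omega> in M. Qf \<pi> t (H t \<omega>) (A t \<omega>) = Qf \<pi>' t (H t \<omega>) (A t \<omega>)"
  shows "AE \<omega> in M. Qf \<pi> t (H t \<omega>) (\<rho> (H t \<omega>)) = Qf \<pi>' t (H t \<omega>) (\<rho> (H t \<omega>))"
proof -
  have "AE \<omega> in M. Qf \<pi> t (H t \<omega>) (\<rho> (H t \<omega>)) \<le> Qf \<pi>' t (H t \<omega>) (\<rho> (H t \<omega>))"
    by (rule lift_le[OF qc qc' t \<rho>]) (use eq in \<open>auto elim: eventually_mono\<close>)
  moreover have "AE \<omega> in M. Qf \<pi>' t (H t \<omega>) (\<rho> (H t \<omega>)) \<le> Qf \<pi> t (H t \<omega>) (\<rho> (H t \<omega>))"
    by (rule lift_le[OF qc' qc t \<rho>]) (use eq in \<open>auto elim: eventually_mono\<close>)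
  ultimately show ?thesis by eventually_elim auto
qed

lemma compare_reg_eq:
  assumes qc: "qc \<pi>" and qc': "qc \<pi>'" and t: "t \<in> {1..T}"
    and eq: "AE \<omega> in M. target \<pi> t \<omega> = target \<pi>' t \<omega>"
  shows "AE \<omega> in M. Qf \<pi> t (H t \<omega>) (A t \<omega>) = Qf \<pi>' t (H t \<omega>) (A t \<omega>)"
proof -
  have "AE \<omega> in M. Qf \<pi> t (H t \<omega>) (A t \<omega>) \<le> Qf \<pi>' t (H t \<omega>) (A t \<omega>)"
    by (rule compare_reg[OF qc qc' t]) (use eq in \<open>auto elim: eventually_mono\<close>)
  moreover have "AE \<omega> in M. Qf \<pi>' t (H t \<omega>) (A t \<omega>) \<le> Qf \<pi> t (H t \<omega>) (A t \<omega>)"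
    by (rule compare_reg[OF qc' qc t]) (use eq in \<open>auto elim: eventually_mono\<close>)
  ultimately show ?thesis by eventually_elim auto
qed

lemma target_Suc: "t < T \<Longrightarrow> target \<pi> t \<omega> = Y t (obs_acts A t \<omega>) \<omega> + U \<pi> (Suc t) \<omega>"
  by (simp add: target_def)

lemma target_T: "target \<pi> T \<omega> = Y T (obs_acts A T \<omega>) \<omega>"
  by (simp add: target_def)

end

locale setting2 = setting M SM T d S Y A Pcl e Qf \<eta>
  for M :: "'w measure" and SM :: "'s measure" and T d S Y A Pcl e Qf \<eta> +
  fixes \<pi>s \<pi>B \<pi>h :: "nat \<Rightarrow> 's hist \<Rightarrow> nat"
  assumes \<pi>s_cls: "\<forall>t\<in>{2..T}. \<pi>s t \<in> Pcl t"
    and \<pi>s_opt: "\<forall>t\<in>{2..T}. AE \<omega> in M. \<forall>\<pi>\<in>Pcl t.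
          Qf \<pi>s t (obs_hist S A t \<omega>) (\<pi> (obs_hist S A t \<omega>))
          \<le> Qf \<pi>s t (obs_hist S A t \<omega>) (\<pi>s t (obs_hist S A t \<omega>))"
    and backward: "\<pi>B \<in> policy_class T Pcl"
    and backward_argmax: "\<And>t \<pi>. t \<in> {1..T} \<Longrightarrow> \<pi> \<in> Pcl t \<Longrightarrow>
       (\<integral>\<omega>. Qf \<pi>B t (obs_hist S A t \<omega>) (\<pi> (obs_hist S A t \<omega>)) \<partial>M)
       \<le> (\<integral>\<omega>. Qf \<pi>B t (obs_hist S A t \<omega>) (\<pi>B t (obs_hist S A t \<omega>)) \<partial>M)"
    and est: "\<pi>h \<in> policy_class T Pcl"
begin

lemma qc_s: "qc \<pi>s" using \<pi>s_cls by blast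

lemma pc_qc: "\<pi> \<in> policy_class T Pcl \<Longrightarrow> qc \<pi>"
  by (auto simp: policy_class_def)

lemma pc_in: "\<pi> \<in> policy_class T Pcl \<Longrightarrow> t \<in> {1..T} \<Longrightarrow> \<pi> t \<in> Pcl t"
  by (auto simp: policy_class_def)

lemma qc_B: "qc \<pi>B" using pc_qc[OF backward] .

lemma s_opt: "t \<in> {2..T} \<Longrightarrow> \<rho> \<in> Pcl t \<Longrightarrow> AE \<omega> in M. Qf \<pi>s t (H t \<omega>) (\<rho> (H t \<omega>)) \<le> U \<pi>s t \<omega>"
  using \<pi>s_opt by (auto elim!: eventually_mono)

lemma claimA: assumes qc: "qc \<pi>" and t: "t \<in> {1..T}"
  shows "AE \<omega> in M. Qf \<pi> t (H t \<omega>) (A t \<omega>) \<le> Qf \<pi>s t (H t \<omega>) (A t \<omega>)"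
proof (rule backward_induct[where P="\<lambda>t. AE \<omega> in M. Qf \<pi> t (H t \<omega>) (A t \<omega>) \<le> Qf \<pi>s t (H t \<omega>) (A t \<omega>)"])
  show "t \<in> {1..T}" by (rule t)
next
  show "AE \<omega> in M. Qf \<pi> T (H T \<omega>) (A T \<omega>) \<le> Qf \<pi>s T (H T \<omega>) (A T \<omega>)"
    by (rule compare_reg[OF qc qc_s]) (use T_pos in \<open>auto simp: target_T\<close>)
next
  fix t assume 3: "t \<in> {1..<T}" "AE \<omega> in M. Qf \<pi> (Suc t) (H (Suc t) \<omega>) (A (Suc t) \<omega>) \<le> Qf \<pi>s (Suc t) (H (Suc t) \<omega>) (A (Suc t) \<omega>)"
  have t1: "Suc t \<in> {1..T}" "Suc t \<in> {2..T}" and tt: "t \<in> {1..T}" "t < T" using 3 by auto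
  have r: "\<pi> (Suc t) \<in> Pcl (Suc t)" using qc t1 by blast
  have a1: "AE \<omega> in M. U \<pi> (Suc t) \<omega> \<le> Qf \<pi>s (Suc t) (H (Suc t) \<omega>) (\<pi> (Suc t) (H (Suc t) \<omega>))"
    by (rule lift_le[OF qc qc_s t1(1) r 3(2)])
  have a2: "AE \<omega> in M. Qf \<pi>s (Suc t) (H (Suc t) \<omega>) (\<pi> (Suc t) (H (Suc t) \<omega>)) \<le> U \<pi>s (Suc t) \<omega>"
    by (rule s_opt[OF t1(2) r])
  show "AE \<omega> in M. Qf \<pi> t (H t \<omega>) (A t \<omega>) \<le> Qf \<pi>s t (H t \<omega>) (A t \<omega>)"
  proof (rule compare_reg[OF qc qc_s tt(1)])
    show "AE \<omega> in M. target \<pi> t \<omega> \<le> target \<pi>s t \<omega>"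
      using a1 a2 by eventually_elim (simp add: target_Suc[OF tt(2)])
  qed
qed

lemma claimB:
  assumes t: "t \<in> {1..T}"
  shows "(AE \<omega> in M. Qf \<pi>B t (H t \<omega>) (A t \<omega>) = Qf \<pi>s t (H t \<omega>) (A t \<omega>)) \<and>
         (2 \<le> t \<longrightarrow> (AE \<omega> in M. U \<pi>B t \<omega> = U \<pi>s t \<omega>))"
proof -
  have eqQ_V: "AE \<omega> in M. U \<pi>B t \<omega> = U \<pi>s t \<omega>"
    if t: "t \<in> {2..T}" and eq: "AE \<omega> in M. Qf \<pi>B t (H t \<omega>) (A t \<omega>) = Qf \<pi>s t (H t \<omega>) (A t \<omega>)" for t
  proof -
    have t1: "t \<in> {1..T}" using t by auto
    have rs: "\<pi>s t \<in> Pcl t" using qc_s t by blast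
    have rB: "\<pi>B t \<in> Pcl t" using pc_in[OF backward t1] .
    have x1: "AE \<omega> in M. Qf \<pi>B t (H t \<omega>) (\<pi>s t (H t \<omega>)) = U \<pi>s t \<omega>"
      by (rule lift_eq[OF qc_B qc_s t1 rs eq])
    have x2: "AE \<omega> in M. U \<pi>B t \<omega> = Qf \<pi>s t (H t \<omega>) (\<pi>B t (H t \<omega>))"
      by (rule lift_eq[OF qc_B qc_s t1 rB eq])
    have x3: "AE \<omega> in M. Qf \<pi>s t (H t \<omega>) (\<pi>B t (H t \<omega>)) \<le> U \<pi>s t \<omega>"
      by (rule s_opt[OF t rB])
    let ?V = "\<lambda>\<omega>. Qf \<pi>B t (H t \<omega>) (\<pi>s t (H t \<omega>))"
    have iV: "integrable M ?V" by (rule Qf_rho_int[OF qc_B t1 rs])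
    have iU: "integrable M (U \<pi>B t)" by (rule Qf_rho_int[OF qc_B t1 rB])
    have le: "AE \<omega> in M. U \<pi>B t \<omega> \<le> ?V \<omega>"
      using x1 x2 x3 by eventually_elim simp
    have int_le: "(\<integral>\<omega>. ?V \<omega> \<partial>M) \<le> (\<integral>\<omega>. U \<pi>B t \<omega> \<partial>M)"
      using backward_argmax[OF t1 rs] by simp
    have nn: "AE \<omega> in M. 0 \<le> ?V \<omega> - U \<pi>B t \<omega>" using le by eventually_elim simp
    have "(\<integral>\<omega>. ?V \<omega> - U \<pi>B t \<omega> \<partial>M) = 0"
      using int_le integral_nonneg_AE[OF nn] iV iU by simp
    then have "AE \<omega> in M. ?V \<omega> - U \<pi>B t \<omega> = 0"
      using iV iU nn by (subst (asm) integral_nonneg_eq_0_iff_AE) auto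
    then show ?thesis using x1 by eventually_elim simp
  qed
  show ?thesis
  proof (rule backward_induct[where P="\<lambda>t. (AE \<omega> in M. Qf \<pi>B t (H t \<omega>) (A t \<omega>) = Qf \<pi>s t (H t \<omega>) (A t \<omega>)) \<and>
         (2 \<le> t \<longrightarrow> (AE \<omega> in M. U \<pi>B t \<omega> = U \<pi>s t \<omega>))"])
    show "t \<in> {1..T}" by (rule t)
  next
    have eq: "AE \<omega> in M. Qf \<pi>B T (H T \<omega>) (A T \<omega>) = Qf \<pi>s T (H T \<omega>) (A T \<omega>)"
      by (rule compare_reg_eq[OF qc_B qc_s]) (use T_pos in \<open>auto simp: target_T\<close>)
    show "(AE \<omega> in M. Qf \<pi>B T (H T \<omega>) (A T \<omega>) = Qf \<pi>s T (H T \<omega>) (A T \<omega>)) \<and>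
         (2 \<le> T \<longrightarrow> (AE \<omega> in M. U \<pi>B T \<omega> = U \<pi>s T \<omega>))" using eq eqQ_V[of T] by auto
  next
    fix t assume 3: "t \<in> {1..<T}" "(AE \<omega> in M. Qf \<pi>B (Suc t) (H (Suc t) \<omega>) (A (Suc t) \<omega>) = Qf \<pi>s (Suc t) (H (Suc t) \<omega>) (A (Suc t) \<omega>)) \<and>
         (2 \<le> Suc t \<longrightarrow> (AE \<omega> in M. U \<pi>B (Suc t) \<omega> = U \<pi>s (Suc t) \<omega>))"
    have t1: "Suc t \<in> {2..T}" and tt: "t \<in> {1..T}" "t < T" using 3 by auto
    have v: "AE \<omega> in M. U \<pi>B (Suc t) \<omega> = U \<pi>s (Suc t) \<omega>" using 3(2) tt by simp
    have eq: "AE \<omega> in M. Qf \<pi>B t (H t \<omega>) (A t \<omega>) = Qf \<pi>s t (H t \<omega>) (A t \<omega>)"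
    proof (rule compare_reg_eq[OF qc_B qc_s tt(1)])
      show "AE \<omega> in M. target \<pi>B t \<omega> = target \<pi>s t \<omega>"
        using v by eventually_elim (simp add: target_Suc[OF tt(2)])
    qed
    show "(AE \<omega> in M. Qf \<pi>B t (H t \<omega>) (A t \<omega>) = Qf \<pi>s t (H t \<omega>) (A t \<omega>)) \<and>
         (2 \<le> t \<longrightarrow> (AE \<omega> in M. U \<pi>B t \<omega> = U \<pi>s t \<omega>))" using eq eqQ_V[of t] tt by auto
  qed
qed

lemma opt: assumes t: "t \<in> {2..T}" and qc: "qc \<pi>" and \<rho>: "\<rho> \<in> Pcl t"
  shows "AE \<omega> in M. Qf \<pi> t (H t \<omega>) (\<rho> (H t \<omega>)) \<le> U \<pi>B t \<omega>"
proof -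
  have t1: "t \<in> {1..T}" using t by auto
  have a: "AE \<omega> in M. Qf \<pi> t (H t \<omega>) (\<rho> (H t \<omega>)) \<le> Qf \<pi>s t (H t \<omega>) (\<rho> (H t \<omega>))"
    by (rule lift_le[OF qc qc_s t1 \<rho> claimA[OF qc t1]])
  have b: "AE \<omega> in M. Qf \<pi>s t (H t \<omega>) (\<rho> (H t \<omega>)) \<le> U \<pi>s t \<omega>" by (rule s_opt[OF t \<rho>])
  have c: "AE \<omega> in M. U \<pi>B t \<omega> = U \<pi>s t \<omega>" using claimB[OF t1] t by auto
  show ?thesis using a b c by eventually_elim simp
qed

lemma W1_le: assumes \<pi>: "\<pi> \<in> policy_class T Pcl"
  shows "(\<integral>\<omega>. U \<pi> 1 \<omega> \<partial>M) \<le> (\<integral>\<omega>. U \<pi>B 1 \<omega> \<partial>M)"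
proof -
  have t1: "1 \<in> {1..T}" using T_pos by auto
  have r: "\<pi> 1 \<in> Pcl 1" using pc_in[OF \<pi> t1] .
  have qc: "qc \<pi>" using pc_qc[OF \<pi>] .
  have a: "AE \<omega> in M. U \<pi> 1 \<omega> \<le> Qf \<pi>s 1 (H 1 \<omega>) (\<pi> 1 (H 1 \<omega>))"
    by (rule lift_le[OF qc qc_s t1 r claimA[OF qc t1]])
  have b: "AE \<omega> in M. Qf \<pi>B 1 (H 1 \<omega>) (\<pi> 1 (H 1 \<omega>)) = Qf \<pi>s 1 (H 1 \<omega>) (\<pi> 1 (H 1 \<omega>))"
    by (rule lift_eq[OF qc_B qc_s t1 r]) (use claimB[OF t1] in blast)
  have "(\<integral>\<omega>. U \<pi> 1 \<omega> \<partial>M) \<le> (\<integral>\<omega>. Qf \<pi>B 1 (H 1 \<omega>) (\<pi> 1 (H 1 \<omega>)) \<partial>M)"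
  proof (rule integral_mono_AE)
    show "integrable M (U \<pi> 1)" by (rule Qf_rho_int[OF qc t1 r])
    show "integrable M (\<lambda>\<omega>. Qf \<pi>B 1 (H 1 \<omega>) (\<pi> 1 (H 1 \<omega>)))" by (rule Qf_rho_int[OF qc_B t1 r])
    show "AE \<omega> in M. U \<pi> 1 \<omega> \<le> Qf \<pi>B 1 (H 1 \<omega>) (\<pi> 1 (H 1 \<omega>))" using a b by eventually_elim simp
  qed
  also have "\<dots> \<le> (\<integral>\<omega>. U \<pi>B 1 \<omega> \<partial>M)" using backward_argmax[OF t1 r] by simp
  finally show ?thesis .
qed

end

definition trunc :: "nat \<Rightarrow> 's hist \<Rightarrow> 's hist" where
  "trunc t h = (take (t - 1) (fst h), restrict (snd h) {1..t})"

context setting begin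

lemma take_obs_acts: "k \<le> t \<Longrightarrow> take k (obs_acts A t \<omega>) = obs_acts A k \<omega>"
  by (simp add: obs_acts_def take_map del: upt_Suc)

lemma H_trunc: assumes "1 \<le> t" shows "H t \<omega> = trunc t (H (Suc t) \<omega>)"
proof -
  have e1: "obs_acts A (t - 1) \<omega> = take (t - 1) (obs_acts A t \<omega>)"
    by (simp add: take_obs_acts)
  have e2: "take (s - 1) (obs_acts A (t - 1) \<omega>) = take (s - 1) (obs_acts A t \<omega>)" if "s \<in> {1..t}" for s
  proof -
    have "take (s - 1) (obs_acts A (t - 1) \<omega>) = obs_acts A (s - 1) \<omega>" by (rule take_obs_acts) (use that in auto)
    moreover have "take (s - 1) (obs_acts A t \<omega>) = obs_acts A (s - 1) \<omega>" by (rule take_obs_acts) (use that in auto)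
    ultimately show ?thesis by simp
  qed
  show ?thesis
    unfolding trunc_def obs_hist_def pot_hist_def
    using assms e1 e2 by (auto simp: fun_eq_iff restrict_def take_obs_acts)
qed

lemma A_from_H: assumes "1 \<le> t" shows "A t \<omega> = fst (H (Suc t) \<omega>) ! (t - 1)"
  using assms by (simp add: obs_hist_def pot_hist_def nth_obs_acts)

lemma trunc_meas: "trunc t \<in> measurable (hist_space SM (Suc t)) (hist_space SM t)"
  unfolding trunc_def hist_space_def
proof (intro measurable_Pair measurable_restrict)
  show "(\<lambda>x. take (t - 1) (fst x)) \<in> (count_space UNIV \<Otimes>\<^sub>M Pi\<^sub>M {1..Suc t} (\<lambda>s. SM)) \<rightarrow>\<^sub>M count_space UNIV"
    by (rule measurable_compose[OF measurable_fst]) simp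
  fix i assume "i \<in> {1..t}"
  then show "(\<lambda>x. snd x i) \<in> (count_space UNIV \<Otimes>\<^sub>M Pi\<^sub>M {1..Suc t} (\<lambda>s. SM)) \<rightarrow>\<^sub>M SM"
    by (intro measurable_compose[OF measurable_snd] measurable_component_singleton) auto
qed

lemma Q_step:
  fixes F :: "'s hist \<Rightarrow> real"
  assumes qc: "qc \<pi>" and t: "t \<in> {1..T}" and \<rho>: "\<rho> \<in> Pcl t"
    and F[measurable]: "F \<in> borel_measurable (hist_space SM t)" and Fb: "\<And>h. \<bar>F h\<bar> \<le> c"
  shows "(\<integral>\<omega>. F (H t \<omega>) * Qf \<pi> t (H t \<omega>) (\<rho> (H t \<omega>)) \<partial>M) =
         (\<integral>\<omega>. F (H t \<omega>) * wgt t \<rho> (H t \<omega>) (A t \<omega>) * target \<pi> t \<omega> \<partial>M)"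
proof -
  note [measurable] = H_meas'[OF t] A_meas'[OF t] Qf_meas[OF qc t] wgt_meas[OF t \<rho>] Pcl_meas[OF t \<rho>] e_meas[OF t]
  have tm[measurable]: "target \<pi> t \<in> borel_measurable M"
    using target_int[OF qc t] by (rule borel_measurable_integrable)
  have c0: "0 \<le> c" using Fb[of undefined] by linarith
  have Fw: "\<bar>F h * wgt t \<rho> h b\<bar> \<le> c * (1 / \<eta>)" for h b
    unfolding abs_mult by (rule mult_mono[OF Fb wgt_abs c0]) simp
  have Fwb: "\<bar>F h * wgt t \<rho> h b * of_bool P\<bar> \<le> c * (1 / \<eta>)" for h b P
    using Fw[of h b] c0 eta by (cases P) auto
  have i1: "integrable M (\<lambda>\<omega>. F (H t \<omega>) * wgt t \<rho> (H t \<omega>) b * of_bool (A t \<omega> = b) * target \<pi> t \<omega>)" for b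
  proof -
    have "integrable M (\<lambda>\<omega>. (F (H t \<omega>) * wgt t \<rho> (H t \<omega>) b * of_bool (A t \<omega> = b)) * target \<pi> t \<omega>)"
      by (rule bounded_mult_integrable[OF target_int[OF qc t], where c="c * (1 / \<eta>)"])
         (measurable, rule Fwb)
    then show ?thesis by simp
  qed
  have i2: "integrable M (\<lambda>\<omega>. F (H t \<omega>) * wgt t \<rho> (H t \<omega>) b * of_bool (A t \<omega> = b) * Qf \<pi> t (H t \<omega>) b)" for b
  proof -
    have "integrable M (\<lambda>\<omega>. (F (H t \<omega>) * wgt t \<rho> (H t \<omega>) b) * (of_bool (A t \<omega> = b) * Qf \<pi> t (H t \<omega>) b))"
      by (rule bounded_mult_integrable[OF Qfa_int[OF qc t], where c="c * (1 / \<eta>)"])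
         (measurable, use Fw in auto)
    then show ?thesis by (simp add: ac_simps)
  qed
  have "(\<integral>\<omega>. F (H t \<omega>) * wgt t \<rho> (H t \<omega>) (A t \<omega>) * target \<pi> t \<omega> \<partial>M) =
        (\<integral>\<omega>. (\<Sum>b<d t. F (H t \<omega>) * wgt t \<rho> (H t \<omega>) b * of_bool (A t \<omega> = b) * target \<pi> t \<omega>) \<partial>M)"
  proof (rule Bochner_Integration.integral_cong[OF refl])
    fix \<omega> assume w: "\<omega> \<in> space M"
    show "F (H t \<omega>) * wgt t \<rho> (H t \<omega>) (A t \<omega>) * target \<pi> t \<omega> =
        (\<Sum>b<d t. F (H t \<omega>) * wgt t \<rho> (H t \<omega>) b * of_bool (A t \<omega> = b) * target \<pi> t \<omega>)"
      using sum_of_bool_sel[OF A_range[OF t w], where f="\<lambda>b. F (H t \<omega>) * wgt t \<rho> (H t \<omega>) b * target \<pi> t \<omega>"]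
      by (simp add: ac_simps)
  qed
  also have "\<dots> = (\<Sum>b<d t. (\<integral>\<omega>. F (H t \<omega>) * wgt t \<rho> (H t \<omega>) b * of_bool (A t \<omega> = b) * target \<pi> t \<omega> \<partial>M))"
    by (rule Bochner_Integration.integral_sum) (rule i1)
  also have "\<dots> = (\<Sum>b<d t. (\<integral>\<omega>. F (H t \<omega>) * wgt t \<rho> (H t \<omega>) b * of_bool (A t \<omega> = b) * Qf \<pi> t (H t \<omega>) b \<partial>M))"
  proof (rule sum.cong[OF refl])
    fix b
    show "(\<integral>\<omega>. F (H t \<omega>) * wgt t \<rho> (H t \<omega>) b * of_bool (A t \<omega> = b) * target \<pi> t \<omega> \<partial>M) =
          (\<integral>\<omega>. F (H t \<omega>) * wgt t \<rho> (H t \<omega>) b * of_bool (A t \<omega> = b) * Qf \<pi> t (H t \<omega>) b \<partial>M)"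
      by (rule cr_eq[OF qc t _ Fw]) measurable
  qed
  also have "\<dots> = (\<Sum>b<d t. (\<integral>\<omega>. F (H t \<omega>) * Qf \<pi> t (H t \<omega>) b * of_bool (\<rho> (H t \<omega>) = b) \<partial>M))"
  proof (rule sum.cong[OF refl])
    fix b
    have "(\<integral>\<omega>. F (H t \<omega>) * wgt t \<rho> (H t \<omega>) b * of_bool (A t \<omega> = b) * Qf \<pi> t (H t \<omega>) b \<partial>M) =
          (\<integral>\<omega>. (F (H t \<omega>) * Qf \<pi> t (H t \<omega>) b) * wgt t \<rho> (H t \<omega>) b * of_bool (A t \<omega> = b) \<partial>M)"
      by (simp add: ac_simps)
    also have "\<dots> = (\<integral>\<omega>. (F (H t \<omega>) * Qf \<pi> t (H t \<omega>) b) * of_bool (\<rho> (H t \<omega>) = b) \<partial>M)"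
      by (rule ipw(2)[OF t \<rho>, where G="\<lambda>h. F h * Qf \<pi> t h b"]) measurable
    finally show "(\<integral>\<omega>. F (H t \<omega>) * wgt t \<rho> (H t \<omega>) b * of_bool (A t \<omega> = b) * Qf \<pi> t (H t \<omega>) b \<partial>M) =
          (\<integral>\<omega>. F (H t \<omega>) * Qf \<pi> t (H t \<omega>) b * of_bool (\<rho> (H t \<omega>) = b) \<partial>M)" .
  qed
  also have "\<dots> = (\<integral>\<omega>. (\<Sum>b<d t. F (H t \<omega>) * Qf \<pi> t (H t \<omega>) b * of_bool (\<rho> (H t \<omega>) = b)) \<partial>M)"
  proof (rule Bochner_Integration.integral_sum[symmetric])
    fix b
    have "integrable M (\<lambda>\<omega>. F (H t \<omega>) * (Qf \<pi> t (H t \<omega>) b * of_bool (\<rho> (H t \<omega>) = b)))"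
      by (rule bounded_mult_integrable[OF Qf_rho_b_int[OF qc t \<rho>]]) (measurable, rule Fb)
    then show "integrable M (\<lambda>\<omega>. F (H t \<omega>) * Qf \<pi> t (H t \<omega>) b * of_bool (\<rho> (H t \<omega>) = b))"
      by (simp add: ac_simps)
  qed
  also have "\<dots> = (\<integral>\<omega>. F (H t \<omega>) * Qf \<pi> t (H t \<omega>) (\<rho> (H t \<omega>)) \<partial>M)"
  proof (rule Bochner_Integration.integral_cong[OF refl])
    fix \<omega> assume w: "\<omega> \<in> space M"
    show "(\<Sum>b<d t. F (H t \<omega>) * Qf \<pi> t (H t \<omega>) b * of_bool (\<rho> (H t \<omega>) = b)) = F (H t \<omega>) * Qf \<pi> t (H t \<omega>) (\<rho> (H t \<omega>))"
    proof -
      have "(\<Sum>b<d t. F (H t \<omega>) * Qf \<pi> t (H t \<omega>) b * of_bool (\<rho> (H t \<omega>) = b)) =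
          (\<Sum>b<d t. of_bool (\<rho> (H t \<omega>) = b) * (F (H t \<omega>) * Qf \<pi> t (H t \<omega>) b))"
        by (intro sum.cong) auto
      also have "\<dots> = F (H t \<omega>) * Qf \<pi> t (H t \<omega>) (\<rho> (H t \<omega>))"
        by (rule sum_of_bool_sel[OF Pi_range[OF t \<rho>, of "H t \<omega>"]])
      finally show ?thesis .
    qed
  qed
  finally show ?thesis by simp
qed

end

context setting begin

definition pterm :: "(nat \<Rightarrow> 's hist \<Rightarrow> nat) \<Rightarrow> nat \<Rightarrow> nat \<Rightarrow> nat list \<Rightarrow> 'w \<Rightarrow> real" where
  "pterm \<pi> t s a \<omega> = Y s a \<omega> * of_bool (obs_acts A (t - 1) \<omega> = take (t - 1) a) *
     (\<Prod>l\<in>{t..s}. of_bool (\<pi> l (pot_hist S l (take (l - 1) a) \<omega>) = a ! (l - 1)))"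

definition Kt :: "(nat \<Rightarrow> 's hist \<Rightarrow> nat) \<Rightarrow> nat \<Rightarrow> nat \<Rightarrow> nat list \<Rightarrow> 's hist \<times> ((nat \<Rightarrow> real) \<times> (nat \<Rightarrow> 's)) \<Rightarrow> real" where
  "Kt \<pi> t s a x = fst (snd x) s * of_bool (fst (fst x) = take (t - 1) a) *
     (\<Prod>l\<in>{t..s}. of_bool (\<pi> l (take (l - 1) a,
         restrict (\<lambda>j. if j \<le> t then snd (fst x) j else snd (snd x) j) {1..l}) = a ! (l - 1)))"

lemma pot_hist_take: "pot_hist S l (take (l - 1) a) \<omega> = (take (l - 1) a, restrict (\<lambda>j. S j (take (j - 1) a) \<omega>) {1..l})"
  by (auto simp: pot_hist_def fun_eq_iff restrict_def min_def)

lemma H_eq_pot: "obs_acts A (t - 1) \<omega> = take (t - 1) a \<Longrightarrow> H t \<omega> = pot_hist S t (take (t - 1) a) \<omega>"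
  by (simp add: obs_hist_def)

lemma Kt_eq:
  assumes t: "t \<in> {1..T}" and s: "s \<in> {t..T}" and a: "a \<in> act_seqs d s" and a': "take s a' = a"
  shows "pterm \<pi> t s a \<omega> = Kt \<pi> t s a (H t \<omega>, Zp t a' \<omega>)"
proof (cases "obs_acts A (t - 1) \<omega> = take (t - 1) a")
  case False
  have "fst (H t \<omega>) = obs_acts A (t - 1) \<omega>" by (simp add: obs_hist_def pot_hist_def)
  then show ?thesis using False by (simp add: pterm_def Kt_def)
next
  case True
  have la: "length a = s" using a by (simp add: act_seqs_def)
  have f1: "fst (H t \<omega>) = take (t - 1) a" using True by (simp add: obs_hist_def pot_hist_def)
  have f2: "fst (Zp t a' \<omega>) s = Y s a \<omega>" using s a' by (simp add: Zp_def)
  have f3: "restrict (\<lambda>j. if j \<le> t then snd (H t \<omega>) j else snd (Zp t a' \<omega>) j) {1..l} =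
      restrict (\<lambda>j. S j (take (j - 1) a) \<omega>) {1..l}" if l: "l \<in> {t..s}" for l
  proof (rule restrict_ext)
    fix j assume j: "j \<in> {1..l}"
    show "(if j \<le> t then snd (H t \<omega>) j else snd (Zp t a' \<omega>) j) = S j (take (j - 1) a) \<omega>"
    proof (cases "j \<le> t")
      case True
      then show ?thesis using j \<open>obs_acts A (t - 1) \<omega> = take (t - 1) a\<close>
        by (simp add: obs_hist_def pot_hist_def min_def)
    next
      case False
      have "take (j - 1) a' = take (j - 1) a" using j l a' False by (auto simp: min_def)
      then show ?thesis using False j l s by (simp add: Zp_def)
    qed
  qed
  have pr: "(\<Prod>l\<in>{t..s}. of_bool (\<pi> l (take (l - 1) a,
         restrict (\<lambda>j. if j \<le> t then snd (fst (H t \<omega>, Zp t a' \<omega>)) j else snd (snd (H t \<omega>, Zp t a' \<omega>)) j) {1..l}) = a ! (l - 1)) :: real)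
     = (\<Prod>l\<in>{t..s}. of_bool (\<pi> l (pot_hist S l (take (l - 1) a) \<omega>) = a ! (l - 1)))"
  proof (rule prod.cong[OF refl])
    fix l assume l: "l \<in> {t..s}"
    show "(of_bool (\<pi> l (take (l - 1) a,
         restrict (\<lambda>j. if j \<le> t then snd (fst (H t \<omega>, Zp t a' \<omega>)) j else snd (snd (H t \<omega>, Zp t a' \<omega>)) j) {1..l}) = a ! (l - 1)) :: real)
      = of_bool (\<pi> l (pot_hist S l (take (l - 1) a) \<omega>) = a ! (l - 1))"
      unfolding fst_conv snd_conv f3[OF l] pot_hist_take ..
  qed
  show ?thesis
    unfolding pterm_def Kt_def pr using True f1 f2 by simp
qed

lemma Kt_meas:
  assumes t: "t \<in> {1..T}" and s: "s \<in> {t..T}" and \<pi>: "\<forall>l\<in>{1..T}. \<pi> l \<in> Pcl l"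
  shows "Kt \<pi> t s a \<in> borel_measurable (hist_space SM t \<Otimes>\<^sub>M MZ t)"
proof -
  have m1: "(\<lambda>x::'s hist \<times> ((nat \<Rightarrow> real) \<times> (nat \<Rightarrow> 's)). fst (snd x) s) \<in> borel_measurable (hist_space SM t \<Otimes>\<^sub>M MZ t)"
    unfolding MZ_def using s
    by (intro measurable_compose[OF measurable_snd] measurable_compose[OF measurable_fst]
        measurable_component_singleton) auto
  have m2: "(\<lambda>x::'s hist \<times> ((nat \<Rightarrow> real) \<times> (nat \<Rightarrow> 's)). of_bool (fst (fst x) = take (t - 1) a) :: real)
      \<in> borel_measurable (hist_space SM t \<Otimes>\<^sub>M MZ t)"
  proof -
    have "(\<lambda>x::'s hist \<times> ((nat \<Rightarrow> real) \<times> (nat \<Rightarrow> 's)). fst (fst x)) \<in> measurable (hist_space SM t \<Otimes>\<^sub>M MZ t) (count_space UNIV)"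
      unfolding hist_space_def by (intro measurable_compose[OF measurable_fst] measurable_fst)
    then show ?thesis by measurable
  qed
  have m3: "(\<lambda>x::'s hist \<times> ((nat \<Rightarrow> real) \<times> (nat \<Rightarrow> 's)). of_bool (\<pi> l (take (l - 1) a,
         restrict (\<lambda>j. if j \<le> t then snd (fst x) j else snd (snd x) j) {1..l}) = a ! (l - 1)) :: real)
      \<in> borel_measurable (hist_space SM t \<Otimes>\<^sub>M MZ t)" if l: "l \<in> {t..s}" for l
  proof -
    have l1: "l \<in> {1..T}" using l t s by auto
    have inner: "(\<lambda>x::'s hist \<times> ((nat \<Rightarrow> real) \<times> (nat \<Rightarrow> 's)). (take (l - 1) a,
         restrict (\<lambda>j. if j \<le> t then snd (fst x) j else snd (snd x) j) {1..l})) \<in> measurable (hist_space SM t \<Otimes>\<^sub>M MZ t) (hist_space SM l)"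
      unfolding hist_space_def
    proof (intro measurable_Pair measurable_restrict)
      fix j assume j: "j \<in> {1..l}"
      show "(\<lambda>x::'s hist \<times> ((nat \<Rightarrow> real) \<times> (nat \<Rightarrow> 's)). if j \<le> t then snd (fst x) j else snd (snd x) j)
          \<in> (count_space UNIV \<Otimes>\<^sub>M Pi\<^sub>M {1..t} (\<lambda>s. SM)) \<Otimes>\<^sub>M MZ t \<rightarrow>\<^sub>M SM"
      proof (cases "j \<le> t")
        case True
        have eq: "(\<lambda>x::'s hist \<times> ((nat \<Rightarrow> real) \<times> (nat \<Rightarrow> 's)). if j \<le> t then snd (fst x) j else snd (snd x) j) = (\<lambda>x. snd (fst x) j)"
          using True by simp
        have "(\<lambda>x::'s hist \<times> ((nat \<Rightarrow> real) \<times> (nat \<Rightarrow> 's)). snd (fst x) j) \<in> (count_space UNIV \<Otimes>\<^sub>M Pi\<^sub>M {1..t} (\<lambda>s. SM)) \<Otimes>\<^sub>M MZ t \<rightarrow>\<^sub>M SM"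
          by (rule measurable_compose[OF measurable_fst], rule measurable_compose[OF measurable_snd],
              rule measurable_component_singleton) (use j True in auto)
        then show ?thesis by (simp only: eq)
      next
        case False
        have eq: "(\<lambda>x::'s hist \<times> ((nat \<Rightarrow> real) \<times> (nat \<Rightarrow> 's)). if j \<le> t then snd (fst x) j else snd (snd x) j) = (\<lambda>x. snd (snd x) j)"
          using False by simp
        have "(\<lambda>x::'s hist \<times> ((nat \<Rightarrow> real) \<times> (nat \<Rightarrow> 's)). snd (snd x) j) \<in> (count_space UNIV \<Otimes>\<^sub>M Pi\<^sub>M {1..t} (\<lambda>s. SM)) \<Otimes>\<^sub>M MZ t \<rightarrow>\<^sub>M SM"
          unfolding MZ_def
          by (rule measurable_compose[OF measurable_snd], rule measurable_compose[OF measurable_snd],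
              rule measurable_component_singleton) (use j l s False in auto)
        then show ?thesis by (simp only: eq)
      qed
    qed simp
    have "\<pi> l \<in> measurable (hist_space SM l) (count_space UNIV)" using Pcl_meas[OF l1] \<pi> l1 by blast
    then have "(\<lambda>x. \<pi> l (take (l - 1) a, restrict (\<lambda>j. if j \<le> t then snd (fst x) j else snd (snd x) j) {1..l}))
        \<in> measurable (hist_space SM t \<Otimes>\<^sub>M MZ t) (count_space UNIV)"
      using inner by (rule measurable_compose[rotated])
    then show ?thesis by measurable
  qed
  show ?thesis unfolding Kt_def
    using m1 m2 m3 by (intro borel_measurable_times borel_measurable_prod) auto
qed


lemma ext_seq: assumes a: "a \<in> act_seqs d s" and s: "s \<le> T"
  shows "\<exists>a'\<in>act_seqs d T. take s a' = a"
proof (intro bexI)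
  have la: "length a = s" using a by (simp add: act_seqs_def)
  show "take s (a @ replicate (T - s) 0) = a" using la by simp
  show "a @ replicate (T - s) 0 \<in> act_seqs d T"
    unfolding act_seqs_def
  proof (intro CollectI conjI allI impI)
    show "length (a @ replicate (T - s) 0) = T" using la s by simp
    fix i assume i: "i < T"
    show "(a @ replicate (T - s) 0) ! i < d (Suc i)"
    proof (cases "i < s")
      case True then show ?thesis using a la by (simp add: nth_append act_seqs_def)
    next
      case False then show ?thesis using la i d_pos[of "Suc i"] by (simp add: nth_append)
    qed
  qed
qed

lemma pcl_in: "\<pi> \<in> policy_class T Pcl \<Longrightarrow> t \<in> {1..T} \<Longrightarrow> \<pi> t \<in> Pcl t"
  by (simp add: policy_class_def)

lemma pc_all: "\<pi> \<in> policy_class T Pcl \<Longrightarrow> \<forall>l\<in>{1..T}. \<pi> l \<in> Pcl l"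
  by (simp add: policy_class_def)

lemma pterm_meas:
  assumes \<pi>: "\<pi> \<in> policy_class T Pcl" and t: "t \<in> {1..T}" and s: "s \<in> {t..T}" and a: "a \<in> act_seqs d s"
  shows "pterm \<pi> t s a \<in> borel_measurable M"
proof -
  obtain a' where a': "a' \<in> act_seqs d T" "take s a' = a" using ext_seq[OF a] s by auto
  have "(\<lambda>\<omega>. Kt \<pi> t s a (H t \<omega>, Zp t a' \<omega>)) \<in> borel_measurable M"
    using Kt_meas[OF t s pc_all[OF \<pi>]] H_meas'[OF t] Zp_meas[OF t a'(1)] by measurable
  then show ?thesis
    by (rule measurable_cong[THEN iffD1, rotated]) (simp add: Kt_eq[OF t s a a'(2)])
qed

lemma pterm_int:
  assumes \<pi>: "\<pi> \<in> policy_class T Pcl" and t: "t \<in> {1..T}" and s: "s \<in> {t..T}" and a: "a \<in> act_seqs d s"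
  shows "integrable M (pterm \<pi> t s a)"
proof (rule Bochner_Integration.integrable_bound[OF Y_int[of s a]])
  show "s \<in> {1..T}" using s t by auto
  show "a \<in> act_seqs d s" by (rule a)
  show "pterm \<pi> t s a \<in> borel_measurable M" by (rule pterm_meas[OF assms])
  show "AE \<omega> in M. norm (pterm \<pi> t s a \<omega>) \<le> norm (Y s a \<omega>)"
  proof (rule AE_I2)
    fix \<omega>
    have "\<bar>(\<Prod>l\<in>{t..s}. of_bool (\<pi> l (pot_hist S l (take (l - 1) a) \<omega>) = a ! (l - 1)) :: real)\<bar> \<le> 1"
      by (subst abs_prod) (intro prod_le_1, auto)
    then show "norm (pterm \<pi> t s a \<omega>) \<le> norm (Y s a \<omega>)"
      unfolding pterm_def real_norm_def abs_mult
      by (auto intro!: mult_left_le)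
  qed
qed

lemma pterm_nz:
  assumes "pterm \<pi> t s a \<omega> \<noteq> 0" and "t \<le> s"
  shows "obs_acts A (t - 1) \<omega> = take (t - 1) a" and "\<pi> t (H t \<omega>) = a ! (t - 1)"
proof -
  show o: "obs_acts A (t - 1) \<omega> = take (t - 1) a" using assms(1) by (auto simp: pterm_def)
  have "(\<Prod>l\<in>{t..s}. of_bool (\<pi> l (pot_hist S l (take (l - 1) a) \<omega>) = a ! (l - 1)) :: real) \<noteq> 0"
    using assms(1) by (auto simp: pterm_def)
  then have "\<pi> t (pot_hist S t (take (t - 1) a) \<omega>) = a ! (t - 1)"
    using assms(2) by (auto simp: prod_zero_iff)
  then show "\<pi> t (H t \<omega>) = a ! (t - 1)" using H_eq_pot[OF o] by simp
qed

lemma ign_step: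
  fixes \<phi> :: "'s hist \<Rightarrow> real"
  assumes \<pi>: "\<pi> \<in> policy_class T Pcl" and t: "t \<in> {1..T}" and s: "s \<in> {t..T}" and a: "a \<in> act_seqs d s"
    and \<phi>[measurable]: "\<phi> \<in> borel_measurable (hist_space SM t)"
  shows "(\<integral>\<omega>. \<phi> (H t \<omega>) * pterm \<pi> t s a \<omega> \<partial>M) =
         (\<integral>\<omega>. \<phi> (H t \<omega>) * wgt t (\<pi> t) (H t \<omega>) (a ! (t - 1)) * of_bool (A t \<omega> = a ! (t - 1)) * pterm \<pi> t s a \<omega> \<partial>M)"
proof -
  obtain a' where a': "a' \<in> act_seqs d T" "take s a' = a" using ext_seq[OF a] s by auto
  have \<rho>: "\<pi> t \<in> Pcl t" using pcl_in[OF \<pi> t] .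
  define b where "b = a ! (t - 1)"
  note [measurable] = H_meas'[OF t] A_meas'[OF t] wgt_meas[OF t \<rho>] Zp_meas[OF t a'(1)] Kt_meas[OF t s pc_all[OF \<pi>]]
    e_meas[OF t] pterm_meas[OF \<pi> t s a]
  define K where "K x = \<phi> (fst x) * wgt t (\<pi> t) (fst x) b * Kt \<pi> t s a x" for x
  have K[measurable]: "K \<in> borel_measurable (hist_space SM t \<Otimes>\<^sub>M MZ t)" unfolding K_def by measurable
  have "(\<integral>\<omega>. \<phi> (H t \<omega>) * wgt t (\<pi> t) (H t \<omega>) b * of_bool (A t \<omega> = b) * pterm \<pi> t s a \<omega> \<partial>M)
      = (\<integral>\<omega>. K (H t \<omega>, Zp t a' \<omega>) * of_bool (A t \<omega> = b) \<partial>M)"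
    by (intro Bochner_Integration.integral_cong) (auto simp: K_def Kt_eq[OF t s a a'(2)] ac_simps)
  also have "\<dots> = (\<integral>\<omega>. K (H t \<omega>, Zp t a' \<omega>) * e t (H t \<omega>) b \<partial>M)"
    by (rule ign_transfer(2)[OF t a'(1) K])
  also have "\<dots> = (\<integral>\<omega>. \<phi> (H t \<omega>) * pterm \<pi> t s a \<omega> \<partial>M)"
  proof (rule integral_cong_AE)
    show "(\<lambda>\<omega>. K (H t \<omega>, Zp t a' \<omega>) * e t (H t \<omega>) b) \<in> borel_measurable M" by measurable
    show "(\<lambda>\<omega>. \<phi> (H t \<omega>) * pterm \<pi> t s a \<omega>) \<in> borel_measurable M" by measurable
    show "AE \<omega> in M. K (H t \<omega>, Zp t a' \<omega>) * e t (H t \<omega>) b = \<phi> (H t \<omega>) * pterm \<pi> t s a \<omega>"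
      using overlap_rho[OF t \<rho>] AE_space
    proof eventually_elim
      case (elim \<omega>)
      have Kw: "K (H t \<omega>, Zp t a' \<omega>) = \<phi> (H t \<omega>) * wgt t (\<pi> t) (H t \<omega>) b * pterm \<pi> t s a \<omega>"
        by (simp add: K_def Kt_eq[OF t s a a'(2)])
      show ?case
      proof (cases "pterm \<pi> t s a \<omega> = 0")
        case True then show ?thesis by (simp add: Kw)
      next
        case False
        have pb: "\<pi> t (H t \<omega>) = b" using pterm_nz(2)[OF False] s by (simp add: b_def)
        have we: "wgt t (\<pi> t) (H t \<omega>) b * e t (H t \<omega>) b = 1"
          using elim(1) pb eta by (simp add: wgt_def)
        have "K (H t \<omega>, Zp t a' \<omega>) * e t (H t \<omega>) b =
            (\<phi> (H t \<omega>) * pterm \<pi> t s a \<omega>) * (wgt t (\<pi> t) (H t \<omega>) b * e t (H t \<omega>) b)"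
          unfolding Kw by (simp only: ac_simps)
        then show ?thesis unfolding we by simp
      qed
    qed
  qed
  finally show ?thesis by (simp add: b_def)
qed

lemma rel_step:
  assumes t: "t \<in> {1..T}" and s: "s \<in> {t..T}" and a: "a \<in> act_seqs d s"
  shows "wgt t (\<pi> t) (H t \<omega>) (a ! (t - 1)) * of_bool (A t \<omega> = a ! (t - 1)) * pterm \<pi> t s a \<omega> =
    wgt t (\<pi> t) (H t \<omega>) (A t \<omega>) * (Y s a \<omega> * of_bool (obs_acts A t \<omega> = take t a) *
      (\<Prod>l\<in>{Suc t..s}. of_bool (\<pi> l (pot_hist S l (take (l - 1) a) \<omega>) = a ! (l - 1))))"
proof -
  have la: "length a = s" using a by (simp add: act_seqs_def)
  have ts: "t \<le> s" "1 \<le> t" using s t by auto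
  have set: "{t..s} = insert t {Suc t..s}" using ts by auto
  have oa: "obs_acts A t \<omega> = obs_acts A (t - 1) \<omega> @ [A t \<omega>]"
    using obs_acts_Suc[of "t - 1"] ts by simp
  have ta: "take t a = take (t - 1) a @ [a ! (t - 1)]"
    using take_Suc_conv_app_nth[of "t - 1" a] ts la by simp
  have ob: "(obs_acts A t \<omega> = take t a) \<longleftrightarrow> (obs_acts A (t - 1) \<omega> = take (t - 1) a \<and> A t \<omega> = a ! (t - 1))"
    unfolding oa ta by simp
  let ?P = "\<Prod>l\<in>{Suc t..s}. (of_bool (\<pi> l (pot_hist S l (take (l - 1) a) \<omega>) = a ! (l - 1)) :: real)"
  show ?thesis
  proof (cases "obs_acts A (t - 1) \<omega> = take (t - 1) a \<and> A t \<omega> = a ! (t - 1)")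
    case True
    then have hp: "pot_hist S t (take (t - 1) a) \<omega> = H t \<omega>" using H_eq_pot by simp
    have "wgt t (\<pi> t) (H t \<omega>) (A t \<omega>) * of_bool (\<pi> t (H t \<omega>) = A t \<omega>) = wgt t (\<pi> t) (H t \<omega>) (A t \<omega>)"
      by (simp add: wgt_def)
    note w = this
    have A: "a ! (t - 1) = A t \<omega>" using True by simp
    have "wgt t (\<pi> t) (H t \<omega>) (a ! (t - 1)) * of_bool (A t \<omega> = a ! (t - 1)) * pterm \<pi> t s a \<omega>
       = wgt t (\<pi> t) (H t \<omega>) (A t \<omega>) * (Y s a \<omega> * (of_bool (\<pi> t (H t \<omega>) = A t \<omega>) * ?P))"
      unfolding pterm_def set A using True ts hp by simp
    also have "\<dots> = (wgt t (\<pi> t) (H t \<omega>) (A t \<omega>) * of_bool (\<pi> t (H t \<omega>) = A t \<omega>)) * (Y s a \<omega> * ?P)"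
      by (simp only: ac_simps)
    also have "\<dots> = wgt t (\<pi> t) (H t \<omega>) (A t \<omega>) * (Y s a \<omega> * of_bool (obs_acts A t \<omega> = take t a) * ?P)"
      unfolding w using True ob by simp
    finally show ?thesis .
  next
    case False
    then show ?thesis
    proof (cases "A t \<omega> = a ! (t - 1)")
      case True
      then have "obs_acts A (t - 1) \<omega> \<noteq> take (t - 1) a" using False by simp
      then show ?thesis by (simp add: pterm_def ob)
    next
      case False
      then show ?thesis by (simp add: ob)
    qed
  qed
qed

end

context setting begin

lemma finite_act_seqs: "finite (act_seqs d s)"
proof (rule finite_subset)
  show "act_seqs d s \<subseteq> {xs. set xs \<subseteq> {..<(\<Sum>j\<in>{1..s}. d j)} \<and> length xs = s}"
  proof (rule subsetI, rule CollectI, rule conjI)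
    fix xs assume xs: "xs \<in> act_seqs d s"
    then show "length xs = s" by (simp add: act_seqs_def)
    show "set xs \<subseteq> {..<(\<Sum>j\<in>{1..s}. d j)}"
    proof
      fix x assume x: "x \<in> set xs"
      then obtain i where i: "i < length xs" "xs ! i = x" by (auto simp: in_set_conv_nth)
      have "x < d (Suc i)" using xs i by (auto simp: act_seqs_def)
      also have "d (Suc i) \<le> (\<Sum>j\<in>{1..s}. d j)"
        using xs i by (intro member_le_sum) (auto simp: act_seqs_def)
      finally show "x \<in> {..<(\<Sum>j\<in>{1..s}. d j)}" by simp
    qed
  qed
  show "finite {xs. set xs \<subseteq> {..<(\<Sum>j\<in>{1..s}. d j)} \<and> length xs = s}"
    by (rule finite_lists_length_eq) simp
qed

definition pot_sum :: "(nat \<Rightarrow> 's hist \<Rightarrow> nat) \<Rightarrow> nat \<Rightarrow> 'w \<Rightarrow> real" where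
  "pot_sum \<pi> t \<omega> = (\<Sum>s\<in>{t..T}. \<Sum>a\<in>act_seqs d s. pterm \<pi> t s a \<omega>)"

lemma policy_value_eq: "policy_value M T d S A Y t \<pi> = (\<integral>\<omega>. pot_sum \<pi> t \<omega> \<partial>M)"
  unfolding policy_value_def pot_sum_def pterm_def ..

lemma sum_Y_obs:
  assumes w: "\<omega> \<in> space M" and t: "t \<in> {1..T}"
  shows "(\<Sum>a\<in>act_seqs d t. Y t a \<omega> * of_bool (obs_acts A t \<omega> = take t a) *
      (\<Prod>l\<in>{Suc t..t}. (of_bool (\<pi> l (pot_hist S l (take (l - 1) a) \<omega>) = a ! (l - 1)) :: real))) = Y t (obs_acts A t \<omega>) \<omega>"
proof -
  have "(\<Sum>a\<in>act_seqs d t. Y t a \<omega> * of_bool (obs_acts A t \<omega> = take t a) *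
      (\<Prod>l\<in>{Suc t..t}. (of_bool (\<pi> l (pot_hist S l (take (l - 1) a) \<omega>) = a ! (l - 1)) :: real)))
    = (\<Sum>a\<in>act_seqs d t. if obs_acts A t \<omega> = a then Y t a \<omega> else 0)"
    by (intro sum.cong) (auto simp: act_seqs_def)
  also have "\<dots> = Y t (obs_acts A t \<omega>) \<omega>"
    using obs_acts_in[of t \<omega>] w t by (subst sum.delta') (auto simp: finite_act_seqs)
  finally show ?thesis .
qed

lemma Yobs_int: assumes t: "t \<in> {1..T}" shows "integrable M (\<lambda>\<omega>. Y t (obs_acts A t \<omega>) \<omega>)"
proof -
  have int: "integrable M (\<lambda>\<omega>. \<Sum>a\<in>act_seqs d t. of_bool (obs_acts A t \<omega> = a) * Y t a \<omega>)"
  proof (intro Bochner_Integration.integrable_sum)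
    fix a assume a: "a \<in> act_seqs d t"
    have om: "obs_acts A t \<in> measurable M (count_space UNIV)" using obs_acts_meas t by auto
    have "(\<lambda>l::nat list. of_bool (l = a) :: real) \<in> borel_measurable (count_space UNIV)" by simp
    then have m: "(\<lambda>\<omega>. of_bool (obs_acts A t \<omega> = a) :: real) \<in> borel_measurable M"
      using om by (rule measurable_compose[rotated])
    show "integrable M (\<lambda>\<omega>. of_bool (obs_acts A t \<omega> = a) * Y t a \<omega>)"
      by (rule bounded_mult_integrable[OF Y_int[OF t a] m, where c=1]) simp
  qed
  have eq: "(\<Sum>a\<in>act_seqs d t. of_bool (obs_acts A t \<omega> = a) * Y t a \<omega>) = Y t (obs_acts A t \<omega>) \<omega>"
    if w: "\<omega> \<in> space M" for \<omega>
  proof -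
    have "(\<Sum>a\<in>act_seqs d t. of_bool (obs_acts A t \<omega> = a) * Y t a \<omega>) = (\<Sum>a\<in>act_seqs d t. if obs_acts A t \<omega> = a then Y t a \<omega> else 0)"
      by (intro sum.cong) auto
    also have "\<dots> = Y t (obs_acts A t \<omega>) \<omega>"
      using obs_acts_in[of t \<omega>] w t by (subst sum.delta') (auto simp: finite_act_seqs)
    finally show ?thesis .
  qed
  have "integrable M (\<lambda>\<omega>. \<Sum>a\<in>act_seqs d t. of_bool (obs_acts A t \<omega> = a) * Y t a \<omega>) = integrable M (\<lambda>\<omega>. Y t (obs_acts A t \<omega>) \<omega>)"
    by (rule Bochner_Integration.integrable_cong) (auto simp: eq)
  then show ?thesis using int by simp
qed


lemma ID_core:
  fixes \<phi> :: "'s hist \<Rightarrow> real"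
  assumes \<pi>: "\<pi> \<in> policy_class T Pcl" and t: "t \<in> {1..T}"
    and \<phi>[measurable]: "\<phi> \<in> borel_measurable (hist_space SM t)" and \<phi>b: "\<And>h. \<bar>\<phi> h\<bar> \<le> c"
    and IHyp: "t < T \<Longrightarrow> (\<integral>\<omega>. (\<phi> (H t \<omega>) * wgt t (\<pi> t) (H t \<omega>) (A t \<omega>)) * pot_sum \<pi> (Suc t) \<omega> \<partial>M) =
                       (\<integral>\<omega>. (\<phi> (H t \<omega>) * wgt t (\<pi> t) (H t \<omega>) (A t \<omega>)) * U \<pi> (Suc t) \<omega> \<partial>M)"
  shows "(\<integral>\<omega>. \<phi> (H t \<omega>) * pot_sum \<pi> t \<omega> \<partial>M) = (\<integral>\<omega>. \<phi> (H t \<omega>) * U \<pi> t \<omega> \<partial>M)"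
proof -
  have \<rho>: "\<pi> t \<in> Pcl t" by (rule pcl_in[OF \<pi> t])
  have qc: "qc \<pi>" using \<pi> by (auto simp: policy_class_def)
  note [measurable] = H_meas'[OF t] A_meas'[OF t] wgt_meas[OF t \<rho>] Pcl_meas[OF t \<rho>]
  define \<psi> where "\<psi> \<omega> = \<phi> (H t \<omega>) * wgt t (\<pi> t) (H t \<omega>) (A t \<omega>)" for \<omega>
  have wA: "(\<lambda>\<omega>. wgt t (\<pi> t) (H t \<omega>) (A t \<omega>)) \<in> borel_measurable M"
  proof (rule measurable_compose_countable'[where I=UNIV and f="\<lambda>i \<omega>. wgt t (\<pi> t) (H t \<omega>) i" and g="A t"])
    fix i :: nat show "(\<lambda>\<omega>. wgt t (\<pi> t) (H t \<omega>) i) \<in> borel_measurable M" by measurable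
  qed (auto intro: A_meas'[OF t])
  have \<psi>m[measurable]: "\<psi> \<in> borel_measurable M" unfolding \<psi>_def using wA by measurable
  have c0: "0 \<le> c" using \<phi>b[of undefined] by linarith
  have \<psi>b: "\<bar>\<psi> \<omega>\<bar> \<le> c * (1 / \<eta>)" for \<omega>
    unfolding \<psi>_def abs_mult by (rule mult_mono[OF \<phi>b wgt_abs c0]) simp
  define Pp where "Pp s a \<omega> = Y s a \<omega> * of_bool (obs_acts A t \<omega> = take t a) *
      (\<Prod>l\<in>{Suc t..s}. (of_bool (\<pi> l (pot_hist S l (take (l - 1) a) \<omega>) = a ! (l - 1)) :: real))" for s a \<omega>
  have iphi: "integrable M (\<lambda>\<omega>. \<phi> (H t \<omega>) * pterm \<pi> t s a \<omega>)" if s: "s \<in> {t..T}" and a: "a \<in> act_seqs d s" for s a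
    by (rule bounded_mult_integrable[OF pterm_int[OF \<pi> t s a] _ \<phi>b]) measurable
  have step2: "(\<integral>\<omega>. \<phi> (H t \<omega>) * pterm \<pi> t s a \<omega> \<partial>M) = (\<integral>\<omega>. \<psi> \<omega> * Pp s a \<omega> \<partial>M)"
    if s: "s \<in> {t..T}" and a: "a \<in> act_seqs d s" for s a
  proof -
    have "(\<integral>\<omega>. \<phi> (H t \<omega>) * pterm \<pi> t s a \<omega> \<partial>M) =
       (\<integral>\<omega>. \<phi> (H t \<omega>) * wgt t (\<pi> t) (H t \<omega>) (a ! (t - 1)) * of_bool (A t \<omega> = a ! (t - 1)) * pterm \<pi> t s a \<omega> \<partial>M)"
      by (rule ign_step[OF \<pi> t s a \<phi>])
    also have "\<dots> = (\<integral>\<omega>. \<psi> \<omega> * Pp s a \<omega> \<partial>M)"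
    proof (rule Bochner_Integration.integral_cong[OF refl])
      fix \<omega>
      have "\<phi> (H t \<omega>) * wgt t (\<pi> t) (H t \<omega>) (a ! (t - 1)) * of_bool (A t \<omega> = a ! (t - 1)) * pterm \<pi> t s a \<omega>
         = \<phi> (H t \<omega>) * (wgt t (\<pi> t) (H t \<omega>) (a ! (t - 1)) * of_bool (A t \<omega> = a ! (t - 1)) * pterm \<pi> t s a \<omega>)"
        by (simp only: ac_simps)
      also have "\<dots> = \<phi> (H t \<omega>) * (wgt t (\<pi> t) (H t \<omega>) (A t \<omega>) * Pp s a \<omega>)"
        unfolding rel_step[OF t s a] Pp_def ..
      also have "\<dots> = \<psi> \<omega> * Pp s a \<omega>" by (simp add: \<psi>_def)
      finally show "\<phi> (H t \<omega>) * wgt t (\<pi> t) (H t \<omega>) (a ! (t - 1)) * of_bool (A t \<omega> = a ! (t - 1)) * pterm \<pi> t s a \<omega>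
         = \<psi> \<omega> * Pp s a \<omega>" .
    qed
    finally show ?thesis .
  qed
  have step1: "(\<integral>\<omega>. \<phi> (H t \<omega>) * pot_sum \<pi> t \<omega> \<partial>M) =
      (\<Sum>s\<in>{t..T}. \<Sum>a\<in>act_seqs d s. (\<integral>\<omega>. \<phi> (H t \<omega>) * pterm \<pi> t s a \<omega> \<partial>M))"
  proof -
    have "(\<integral>\<omega>. \<phi> (H t \<omega>) * pot_sum \<pi> t \<omega> \<partial>M) =
        (\<integral>\<omega>. (\<Sum>s\<in>{t..T}. \<Sum>a\<in>act_seqs d s. \<phi> (H t \<omega>) * pterm \<pi> t s a \<omega>) \<partial>M)"
      by (simp add: pot_sum_def sum_distrib_left)
    also have "\<dots> = (\<Sum>s\<in>{t..T}. (\<integral>\<omega>. (\<Sum>a\<in>act_seqs d s. \<phi> (H t \<omega>) * pterm \<pi> t s a \<omega>) \<partial>M))"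
      by (rule Bochner_Integration.integral_sum) (use iphi in auto)
    also have "\<dots> = (\<Sum>s\<in>{t..T}. \<Sum>a\<in>act_seqs d s. (\<integral>\<omega>. \<phi> (H t \<omega>) * pterm \<pi> t s a \<omega> \<partial>M))"
      by (intro sum.cong refl Bochner_Integration.integral_sum iphi) auto
    finally show ?thesis .
  qed
  have iPp: "integrable M (\<lambda>\<omega>. \<psi> \<omega> * Pp s a \<omega>)" if s: "s \<in> {t..T}" and a: "a \<in> act_seqs d s" for s a
  proof -
    have "integrable M (\<lambda>\<omega>. \<phi> (H t \<omega>) * pterm \<pi> t s a \<omega>)" by (rule iphi[OF s a])
    moreover have "integrable M (\<lambda>\<omega>. \<psi> \<omega> * Pp s a \<omega>) \<longleftrightarrow> integrable M (\<lambda>\<omega>. \<phi> (H t \<omega>) * wgt t (\<pi> t) (H t \<omega>) (a ! (t - 1)) * of_bool (A t \<omega> = a ! (t - 1)) * pterm \<pi> t s a \<omega>)"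
    proof (rule Bochner_Integration.integrable_cong[OF refl])
      fix \<omega>
      show "\<psi> \<omega> * Pp s a \<omega> = \<phi> (H t \<omega>) * wgt t (\<pi> t) (H t \<omega>) (a ! (t - 1)) * of_bool (A t \<omega> = a ! (t - 1)) * pterm \<pi> t s a \<omega>"
        using rel_step[OF t s a, of \<pi> \<omega>] by (simp add: \<psi>_def Pp_def ac_simps)
    qed
    moreover have "integrable M (\<lambda>\<omega>. (\<phi> (H t \<omega>) * wgt t (\<pi> t) (H t \<omega>) (a ! (t - 1)) * of_bool (A t \<omega> = a ! (t - 1))) * pterm \<pi> t s a \<omega>)"
    proof (rule bounded_mult_integrable[OF pterm_int[OF \<pi> t s a], where c="c * (1 / \<eta>)"])
      show "(\<lambda>\<omega>. \<phi> (H t \<omega>) * wgt t (\<pi> t) (H t \<omega>) (a ! (t - 1)) * of_bool (A t \<omega> = a ! (t - 1))) \<in> borel_measurable M"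
        by measurable
      fix \<omega>
      have "\<bar>\<phi> (H t \<omega>) * wgt t (\<pi> t) (H t \<omega>) (a ! (t - 1))\<bar> \<le> c * (1 / \<eta>)"
        unfolding abs_mult by (rule mult_mono[OF \<phi>b wgt_abs c0]) simp
      then show "\<bar>\<phi> (H t \<omega>) * wgt t (\<pi> t) (H t \<omega>) (a ! (t - 1)) * of_bool (A t \<omega> = a ! (t - 1))\<bar> \<le> c * (1 / \<eta>)"
        using c0 eta by (cases "A t \<omega> = a ! (t - 1)") auto
    qed
    ultimately show ?thesis by simp
  qed
  have step4: "(\<Sum>a\<in>act_seqs d t. (\<integral>\<omega>. \<psi> \<omega> * Pp t a \<omega> \<partial>M)) = (\<integral>\<omega>. \<psi> \<omega> * Y t (obs_acts A t \<omega>) \<omega> \<partial>M)"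
  proof -
    have "(\<Sum>a\<in>act_seqs d t. (\<integral>\<omega>. \<psi> \<omega> * Pp t a \<omega> \<partial>M)) = (\<integral>\<omega>. (\<Sum>a\<in>act_seqs d t. \<psi> \<omega> * Pp t a \<omega>) \<partial>M)"
      by (rule Bochner_Integration.integral_sum[symmetric]) (use iPp t in auto)
    also have "\<dots> = (\<integral>\<omega>. \<psi> \<omega> * Y t (obs_acts A t \<omega>) \<omega> \<partial>M)"
    proof (rule Bochner_Integration.integral_cong[OF refl])
      fix \<omega> assume w: "\<omega> \<in> space M"
      show "(\<Sum>a\<in>act_seqs d t. \<psi> \<omega> * Pp t a \<omega>) = \<psi> \<omega> * Y t (obs_acts A t \<omega>) \<omega>"
        unfolding sum_distrib_left[symmetric] Pp_def using sum_Y_obs[OF w t, of \<pi>] by simp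
    qed
    finally show ?thesis .
  qed
  have step5: "(\<Sum>s\<in>{Suc t..T}. \<Sum>a\<in>act_seqs d s. (\<integral>\<omega>. \<psi> \<omega> * Pp s a \<omega> \<partial>M)) =
      (if t < T then (\<integral>\<omega>. \<psi> \<omega> * U \<pi> (Suc t) \<omega> \<partial>M) else 0)"
  proof (cases "t < T")
    case False then show ?thesis using t by auto
  next
    case True
    have st: "Suc t \<in> {1..T}" using True t by auto
    have PP: "Pp s a \<omega> = pterm \<pi> (Suc t) s a \<omega>" for s a \<omega> by (simp add: Pp_def pterm_def)
    have "(\<Sum>s\<in>{Suc t..T}. \<Sum>a\<in>act_seqs d s. (\<integral>\<omega>. \<psi> \<omega> * Pp s a \<omega> \<partial>M)) =
        (\<Sum>s\<in>{Suc t..T}. (\<integral>\<omega>. (\<Sum>a\<in>act_seqs d s. \<psi> \<omega> * Pp s a \<omega>) \<partial>M))"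
      by (intro sum.cong refl Bochner_Integration.integral_sum[symmetric] iPp) auto
    also have "\<dots> = (\<integral>\<omega>. (\<Sum>s\<in>{Suc t..T}. \<Sum>a\<in>act_seqs d s. \<psi> \<omega> * Pp s a \<omega>) \<partial>M)"
      by (rule Bochner_Integration.integral_sum[symmetric]) (use iPp in \<open>auto intro!: Bochner_Integration.integrable_sum\<close>)
    also have "\<dots> = (\<integral>\<omega>. \<psi> \<omega> * pot_sum \<pi> (Suc t) \<omega> \<partial>M)"
      by (simp add: pot_sum_def sum_distrib_left PP)
    also have "\<dots> = (\<integral>\<omega>. \<psi> \<omega> * U \<pi> (Suc t) \<omega> \<partial>M)"
      using IHyp[OF True] by (simp add: \<psi>_def)
    finally show ?thesis using True by simp
  qed
  have itarget: "(\<integral>\<omega>. \<psi> \<omega> * Y t (obs_acts A t \<omega>) \<omega> \<partial>M) + (if t < T then (\<integral>\<omega>. \<psi> \<omega> * U \<pi> (Suc t) \<omega> \<partial>M) else 0)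
      = (\<integral>\<omega>. \<psi> \<omega> * target \<pi> t \<omega> \<partial>M)"
  proof (cases "t < T")
    case False
    then have "t = T" using t by auto
    then show ?thesis by (simp add: target_T)
  next
    case True
    have st: "Suc t \<in> {1..T}" using True t by auto
    have r1: "\<pi> (Suc t) \<in> Pcl (Suc t)" by (rule pcl_in[OF \<pi> st])
    have i1: "integrable M (\<lambda>\<omega>. \<psi> \<omega> * Y t (obs_acts A t \<omega>) \<omega>)"
      by (rule bounded_mult_integrable[OF Yobs_int[OF t] \<psi>m \<psi>b])
    have i2: "integrable M (\<lambda>\<omega>. \<psi> \<omega> * U \<pi> (Suc t) \<omega>)"
      by (rule bounded_mult_integrable[OF Qf_rho_int[OF qc st r1] \<psi>m \<psi>b])
    show ?thesis using True i1 i2 by (simp add: target_Suc distrib_left)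
  qed
  have "(\<integral>\<omega>. \<phi> (H t \<omega>) * pot_sum \<pi> t \<omega> \<partial>M) = (\<Sum>s\<in>{t..T}. \<Sum>a\<in>act_seqs d s. (\<integral>\<omega>. \<psi> \<omega> * Pp s a \<omega> \<partial>M))"
    unfolding step1 by (intro sum.cong refl step2) auto
  also have "\<dots> = (\<Sum>a\<in>act_seqs d t. (\<integral>\<omega>. \<psi> \<omega> * Pp t a \<omega> \<partial>M)) +
      (\<Sum>s\<in>{Suc t..T}. \<Sum>a\<in>act_seqs d s. (\<integral>\<omega>. \<psi> \<omega> * Pp s a \<omega> \<partial>M))"
    using t by (subst sum.atLeast_Suc_atMost) auto
  also have "\<dots> = (\<integral>\<omega>. \<psi> \<omega> * target \<pi> t \<omega> \<partial>M)"
    unfolding step4 step5 itarget ..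
  also have "\<dots> = (\<integral>\<omega>. \<phi> (H t \<omega>) * U \<pi> t \<omega> \<partial>M)"
    using Q_step[OF qc t \<rho> \<phi> \<phi>b] by (simp add: \<psi>_def)
  finally show ?thesis .
qed

end

context setting begin

lemma ID_all:
  assumes \<pi>: "\<pi> \<in> policy_class T Pcl" and t: "t \<in> {1..T}"
  shows "\<forall>\<phi> c. \<phi> \<in> borel_measurable (hist_space SM t) \<longrightarrow> (\<forall>h. \<bar>\<phi> h\<bar> \<le> c) \<longrightarrow>
     (\<integral>\<omega>. \<phi> (H t \<omega>) * pot_sum \<pi> t \<omega> \<partial>M) = (\<integral>\<omega>. \<phi> (H t \<omega>) * U \<pi> t \<omega> \<partial>M)"
proof (rule backward_induct[where P="\<lambda>t. \<forall>\<phi> c. \<phi> \<in> borel_measurable (hist_space SM t) \<longrightarrow> (\<forall>h. \<bar>\<phi> h\<bar> \<le> c) \<longrightarrow>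
     (\<integral>\<omega>. \<phi> (H t \<omega>) * pot_sum \<pi> t \<omega> \<partial>M) = (\<integral>\<omega>. \<phi> (H t \<omega>) * U \<pi> t \<omega> \<partial>M)"])
  show "t \<in> {1..T}" by (rule t)
next
  have T1: "T \<in> {1..T}" using T_pos by auto
  show "\<forall>\<phi> c. \<phi> \<in> borel_measurable (hist_space SM T) \<longrightarrow> (\<forall>h. \<bar>\<phi> h\<bar> \<le> c) \<longrightarrow>
     (\<integral>\<omega>. \<phi> (H T \<omega>) * pot_sum \<pi> T \<omega> \<partial>M) = (\<integral>\<omega>. \<phi> (H T \<omega>) * U \<pi> T \<omega> \<partial>M)"
  proof (intro allI impI)
    fix \<phi> :: "'s hist \<Rightarrow> real" and c :: real
    assume \<phi>: "\<phi> \<in> borel_measurable (hist_space SM T)" and b: "\<forall>h. \<bar>\<phi> h\<bar> \<le> c"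
    show "(\<integral>\<omega>. \<phi> (H T \<omega>) * pot_sum \<pi> T \<omega> \<partial>M) = (\<integral>\<omega>. \<phi> (H T \<omega>) * U \<pi> T \<omega> \<partial>M)"
      by (rule ID_core[OF \<pi> T1 \<phi>, of c]) (use b in auto)
  qed
next
  fix t assume tt: "t \<in> {1..<T}" and IH: "\<forall>\<phi> c. \<phi> \<in> borel_measurable (hist_space SM (Suc t)) \<longrightarrow> (\<forall>h. \<bar>\<phi> h\<bar> \<le> c) \<longrightarrow>
     (\<integral>\<omega>. \<phi> (H (Suc t) \<omega>) * pot_sum \<pi> (Suc t) \<omega> \<partial>M) = (\<integral>\<omega>. \<phi> (H (Suc t) \<omega>) * U \<pi> (Suc t) \<omega> \<partial>M)"
  have t1: "t \<in> {1..T}" using tt by auto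
  have \<rho>: "\<pi> t \<in> Pcl t" by (rule pcl_in[OF \<pi> t1])
  show "\<forall>\<phi> c. \<phi> \<in> borel_measurable (hist_space SM t) \<longrightarrow> (\<forall>h. \<bar>\<phi> h\<bar> \<le> c) \<longrightarrow>
     (\<integral>\<omega>. \<phi> (H t \<omega>) * pot_sum \<pi> t \<omega> \<partial>M) = (\<integral>\<omega>. \<phi> (H t \<omega>) * U \<pi> t \<omega> \<partial>M)"
  proof (intro allI impI)
    fix \<phi> :: "'s hist \<Rightarrow> real" and c :: real
    assume \<phi>[measurable]: "\<phi> \<in> borel_measurable (hist_space SM t)" and b: "\<forall>h. \<bar>\<phi> h\<bar> \<le> c"
    have c0: "0 \<le> c" using b by (metis abs_ge_zero order.trans)
    define \<phi>' where "\<phi>' h = \<phi> (trunc t h) * wgt t (\<pi> t) (trunc t h) (fst h ! (t - 1))" for h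
    have m1: "(\<lambda>h. \<phi> (trunc t h)) \<in> borel_measurable (hist_space SM (Suc t))"
      by (rule measurable_compose[OF trunc_meas \<phi>])
    have m2: "(\<lambda>h. wgt t (\<pi> t) (trunc t h) (fst h ! (t - 1))) \<in> borel_measurable (hist_space SM (Suc t))"
    proof (rule measurable_compose_countable'[where I=UNIV and f="\<lambda>i h. wgt t (\<pi> t) (trunc t h) i" and g="\<lambda>h. fst h ! (t - 1)"])
      fix i :: nat
      show "(\<lambda>h. wgt t (\<pi> t) (trunc t h) i) \<in> borel_measurable (hist_space SM (Suc t))"
        by (rule measurable_compose[OF trunc_meas wgt_meas[OF t1 \<rho>]])
      show "(\<lambda>h::'s hist. fst h ! (t - 1)) \<in> hist_space SM (Suc t) \<rightarrow>\<^sub>M count_space UNIV"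
        unfolding hist_space_def by (rule measurable_compose[OF measurable_fst]) simp
    qed simp
    have \<phi>'m: "\<phi>' \<in> borel_measurable (hist_space SM (Suc t))"
      unfolding \<phi>'_def using m1 m2 by (rule borel_measurable_times)
    have \<phi>'b: "\<forall>h. \<bar>\<phi>' h\<bar> \<le> c * (1 / \<eta>)"
    proof
      fix h
      show "\<bar>\<phi>' h\<bar> \<le> c * (1 / \<eta>)"
        unfolding \<phi>'_def abs_mult by (rule mult_mono[OF _ wgt_abs c0]) (use b in blast, simp)
    qed
    have eq: "\<phi>' (H (Suc t) \<omega>) = \<phi> (H t \<omega>) * wgt t (\<pi> t) (H t \<omega>) (A t \<omega>)" for \<omega>
      unfolding \<phi>'_def using H_trunc[of t \<omega>] A_from_H[of t \<omega>] t1 by simp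
    have IH': "(\<integral>\<omega>. \<phi>' (H (Suc t) \<omega>) * pot_sum \<pi> (Suc t) \<omega> \<partial>M) = (\<integral>\<omega>. \<phi>' (H (Suc t) \<omega>) * U \<pi> (Suc t) \<omega> \<partial>M)"
      using IH \<phi>'m \<phi>'b by blast
    show "(\<integral>\<omega>. \<phi> (H t \<omega>) * pot_sum \<pi> t \<omega> \<partial>M) = (\<integral>\<omega>. \<phi> (H t \<omega>) * U \<pi> t \<omega> \<partial>M)"
    proof (rule ID_core[OF \<pi> t1 \<phi>, of c])
      show "\<bar>\<phi> h\<bar> \<le> c" for h using b by blast
      show "(\<integral>\<omega>. (\<phi> (H t \<omega>) * wgt t (\<pi> t) (H t \<omega>) (A t \<omega>)) * pot_sum \<pi> (Suc t) \<omega> \<partial>M) =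
           (\<integral>\<omega>. (\<phi> (H t \<omega>) * wgt t (\<pi> t) (H t \<omega>) (A t \<omega>)) * U \<pi> (Suc t) \<omega> \<partial>M)"
        using IH' by (simp add: eq)
    qed
  qed
qed

lemma ID:
  assumes \<pi>: "\<pi> \<in> policy_class T Pcl" and t: "t \<in> {1..T}"
    and \<phi>: "\<phi> \<in> borel_measurable (hist_space SM t)" and b: "\<And>h. \<bar>\<phi> h\<bar> \<le> c"
  shows "(\<integral>\<omega>. \<phi> (H t \<omega>) * pot_sum \<pi> t \<omega> \<partial>M) = (\<integral>\<omega>. \<phi> (H t \<omega>) * U \<pi> t \<omega> \<partial>M)"
  using ID_all[OF \<pi> t] \<phi> b by blast

lemma V_eq:
  assumes \<pi>: "\<pi> \<in> policy_class T Pcl" and t: "t \<in> {1..T}"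
  shows "policy_value M T d S A Y t \<pi> = (\<integral>\<omega>. U \<pi> t \<omega> \<partial>M)"
  using ID[OF \<pi> t, of "\<lambda>_. 1" 1] by (simp add: policy_value_eq)

lemma W_eq: "welfare M T d S Y \<pi> = policy_value M T d S A Y 1 \<pi>"
  unfolding welfare_def policy_value_def by (simp add: obs_acts_def)

end

context setting begin


lemma phi_lift:
  fixes \<phi> :: "'s hist \<Rightarrow> real"
  assumes t: "t \<in> {1..<T}" and \<rho>: "\<rho> \<in> Pcl t"
    and \<phi>: "\<phi> \<in> borel_measurable (hist_space SM t)" and b: "\<And>h. 0 \<le> \<phi> h \<and> \<phi> h \<le> c"
  shows "\<exists>\<phi>'. \<phi>' \<in> borel_measurable (hist_space SM (Suc t)) \<and> (\<forall>h. 0 \<le> \<phi>' h \<and> \<phi>' h \<le> c * (1 / \<eta>)) \<and>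
     (\<forall>\<omega>. \<phi>' (H (Suc t) \<omega>) = \<phi> (H t \<omega>) * wgt t \<rho> (H t \<omega>) (A t \<omega>))"
proof -
  have t1: "t \<in> {1..T}" using t by auto
  have c0: "0 \<le> c" using b[of undefined] by linarith
  define \<phi>' where "\<phi>' h = \<phi> (trunc t h) * wgt t \<rho> (trunc t h) (fst h ! (t - 1))" for h
  have m1: "(\<lambda>h. \<phi> (trunc t h)) \<in> borel_measurable (hist_space SM (Suc t))"
    by (rule measurable_compose[OF trunc_meas \<phi>])
  have m2: "(\<lambda>h. wgt t \<rho> (trunc t h) (fst h ! (t - 1))) \<in> borel_measurable (hist_space SM (Suc t))"
  proof (rule measurable_compose_countable'[where I=UNIV and f="\<lambda>i h. wgt t \<rho> (trunc t h) i" and g="\<lambda>h. fst h ! (t - 1)"])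
    fix i :: nat
    show "(\<lambda>h. wgt t \<rho> (trunc t h) i) \<in> borel_measurable (hist_space SM (Suc t))"
      by (rule measurable_compose[OF trunc_meas wgt_meas[OF t1 \<rho>]])
    show "(\<lambda>h::'s hist. fst h ! (t - 1)) \<in> hist_space SM (Suc t) \<rightarrow>\<^sub>M count_space UNIV"
      unfolding hist_space_def by (rule measurable_compose[OF measurable_fst]) simp
  qed simp
  have "\<phi>' \<in> borel_measurable (hist_space SM (Suc t))"
    unfolding \<phi>'_def using m1 m2 by (rule borel_measurable_times)
  moreover have "\<forall>h. 0 \<le> \<phi>' h \<and> \<phi>' h \<le> c * (1 / \<eta>)"
  proof
    fix h
    have "\<phi>' h \<le> c * (1 / \<eta>)"
      unfolding \<phi>'_def by (rule mult_mono[OF _ wgt_le c0 wgt_nonneg]) (use b in blast)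
    moreover have "0 \<le> \<phi>' h" unfolding \<phi>'_def using b wgt_nonneg by simp
    ultimately show "0 \<le> \<phi>' h \<and> \<phi>' h \<le> c * (1 / \<eta>)" by simp
  qed
  moreover have "\<forall>\<omega>. \<phi>' (H (Suc t) \<omega>) = \<phi> (H t \<omega>) * wgt t \<rho> (H t \<omega>) (A t \<omega>)"
  proof
    fix \<omega>
    have e1: "trunc t (H (Suc t) \<omega>) = H t \<omega>" by (rule H_trunc[symmetric]) (use t1 in auto)
    have e2: "fst (H (Suc t) \<omega>) ! (t - 1) = A t \<omega>" by (rule A_from_H[symmetric]) (use t1 in auto)
    show "\<phi>' (H (Suc t) \<omega>) = \<phi> (H t \<omega>) * wgt t \<rho> (H t \<omega>) (A t \<omega>)"
      unfolding \<phi>'_def e1 e2 ..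
  qed
  ultimately show ?thesis by blast
qed



lemma pterm_cong:
  assumes eq: "\<And>l. l \<in> {t..s} \<Longrightarrow> \<pi> l = \<pi>' l"
  shows "pterm \<pi> t s a \<omega> = pterm \<pi>' t s a \<omega>"
proof -
  have "(\<Prod>l\<in>{t..s}. (of_bool (\<pi> l (pot_hist S l (take (l - 1) a) \<omega>) = a ! (l - 1)) :: real)) =
      (\<Prod>l\<in>{t..s}. of_bool (\<pi>' l (pot_hist S l (take (l - 1) a) \<omega>) = a ! (l - 1)))"
  proof (rule prod.cong[OF refl])
    fix l assume l: "l \<in> {t..s}"
    show "(of_bool (\<pi> l (pot_hist S l (take (l - 1) a) \<omega>) = a ! (l - 1)) :: real) =
      of_bool (\<pi>' l (pot_hist S l (take (l - 1) a) \<omega>) = a ! (l - 1))" unfolding eq[OF l] ..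
  qed
  then show ?thesis unfolding pterm_def by simp
qed

lemma pv_cong: assumes eq: "\<And>l. l \<in> {t..T} \<Longrightarrow> \<pi> l = \<pi>' l"
  shows "policy_value M T d S A Y t \<pi> = policy_value M T d S A Y t \<pi>'"
proof -
  have "pot_sum \<pi> t \<omega> = pot_sum \<pi>' t \<omega>" for \<omega>
    unfolding pot_sum_def
    by (intro sum.cong refl pterm_cong) (use eq in auto)
  then show ?thesis by (simp add: policy_value_eq)
qed



lemma part_a:
  fixes \<phi> :: "'s hist \<Rightarrow> real"
  assumes \<pi>: "\<pi> \<in> policy_class T Pcl" and \<pi>': "\<pi>' \<in> policy_class T Pcl" and t: "t \<in> {1..T}"
    and same: "\<pi> t = \<pi>' t"
    and \<phi>[measurable]: "\<phi> \<in> borel_measurable (hist_space SM t)" and b: "\<And>h. \<bar>\<phi> h\<bar> \<le> c"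
  shows "(\<integral>\<omega>. \<phi> (H t \<omega>) * (U \<pi> t \<omega> - U \<pi>' t \<omega>) \<partial>M) =
    (if t < T then (\<integral>\<omega>. (\<phi> (H t \<omega>) * wgt t (\<pi> t) (H t \<omega>) (A t \<omega>)) * (U \<pi> (Suc t) \<omega> - U \<pi>' (Suc t) \<omega>) \<partial>M) else 0)"
proof -
  have \<rho>: "\<pi> t \<in> Pcl t" by (rule pcl_in[OF \<pi> t])
  have qc: "qc \<pi>" "qc \<pi>'" using \<pi> \<pi>' by (auto simp: policy_class_def)
  note [measurable] = H_meas'[OF t] A_meas'[OF t] wgt_meas[OF t \<rho>] Pcl_meas[OF t \<rho>]
  define \<psi> where "\<psi> \<omega> = \<phi> (H t \<omega>) * wgt t (\<pi> t) (H t \<omega>) (A t \<omega>)" for \<omega>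
  have wA: "(\<lambda>\<omega>. wgt t (\<pi> t) (H t \<omega>) (A t \<omega>)) \<in> borel_measurable M"
  proof (rule measurable_compose_countable'[where I=UNIV and f="\<lambda>i \<omega>. wgt t (\<pi> t) (H t \<omega>) i" and g="A t"])
    fix i :: nat show "(\<lambda>\<omega>. wgt t (\<pi> t) (H t \<omega>) i) \<in> borel_measurable M" by measurable
  qed (auto intro: A_meas'[OF t])
  have \<psi>m[measurable]: "\<psi> \<in> borel_measurable M" unfolding \<psi>_def using wA by measurable
  have c0: "0 \<le> c" using b[of undefined] by linarith
  have \<psi>b: "\<bar>\<psi> \<omega>\<bar> \<le> c * (1 / \<eta>)" for \<omega>
    unfolding \<psi>_def abs_mult by (rule mult_mono[OF b wgt_abs c0]) simp
  have U1: "(\<integral>\<omega>. \<phi> (H t \<omega>) * U \<pi> t \<omega> \<partial>M) = (\<integral>\<omega>. \<psi> \<omega> * target \<pi> t \<omega> \<partial>M)"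
    using Q_step[OF qc(1) t \<rho> \<phi> b] by (simp add: \<psi>_def)
  have U2: "(\<integral>\<omega>. \<phi> (H t \<omega>) * U \<pi>' t \<omega> \<partial>M) = (\<integral>\<omega>. \<psi> \<omega> * target \<pi>' t \<omega> \<partial>M)"
    using Q_step[OF qc(2) t \<rho> \<phi> b] same by (simp add: \<psi>_def)
  have \<rho>': "\<pi>' t \<in> Pcl t" by (rule pcl_in[OF \<pi>' t])
  have iU1: "integrable M (\<lambda>\<omega>. \<phi> (H t \<omega>) * U \<pi> t \<omega>)"
    by (rule bounded_mult_integrable[OF Qf_rho_int[OF qc(1) t \<rho>] _ b]) measurable
  have iU2: "integrable M (\<lambda>\<omega>. \<phi> (H t \<omega>) * U \<pi>' t \<omega>)"
    by (rule bounded_mult_integrable[OF Qf_rho_int[OF qc(2) t \<rho>'] _ b]) measurable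
  have it1: "integrable M (\<lambda>\<omega>. \<psi> \<omega> * target \<pi> t \<omega>)"
    by (rule bounded_mult_integrable[OF target_int[OF qc(1) t] \<psi>m \<psi>b])
  have it2: "integrable M (\<lambda>\<omega>. \<psi> \<omega> * target \<pi>' t \<omega>)"
    by (rule bounded_mult_integrable[OF target_int[OF qc(2) t] \<psi>m \<psi>b])
  have "(\<integral>\<omega>. \<phi> (H t \<omega>) * (U \<pi> t \<omega> - U \<pi>' t \<omega>) \<partial>M) =
      (\<integral>\<omega>. \<phi> (H t \<omega>) * U \<pi> t \<omega> \<partial>M) - (\<integral>\<omega>. \<phi> (H t \<omega>) * U \<pi>' t \<omega> \<partial>M)"
    using iU1 iU2 by (simp add: right_diff_distrib)
  also have "\<dots> = (\<integral>\<omega>. \<psi> \<omega> * target \<pi> t \<omega> \<partial>M) - (\<integral>\<omega>. \<psi> \<omega> * target \<pi>' t \<omega> \<partial>M)"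
    using U1 U2 by simp
  also have "\<dots> = (\<integral>\<omega>. \<psi> \<omega> * (target \<pi> t \<omega> - target \<pi>' t \<omega>) \<partial>M)"
    using it1 it2 by (simp add: right_diff_distrib)
  also have "\<dots> = (if t < T then (\<integral>\<omega>. \<psi> \<omega> * (U \<pi> (Suc t) \<omega> - U \<pi>' (Suc t) \<omega>) \<partial>M) else 0)"
  proof (cases "t < T")
    case True then show ?thesis by (simp add: target_Suc)
  next
    case False then have "t = T" using t by auto
    then show ?thesis by (simp add: target_T)
  qed
  finally show ?thesis by (simp add: \<psi>_def)
qed

end

context setting2 begin

definition R :: "nat \<Rightarrow> real" where
  "R t = stage_regret M T d S A Y t \<pi>h (\<pi>B t)"

definition Bc :: "nat \<Rightarrow> real" where
  "Bc t = (\<Sum>s\<in>{t..T}. (2 / \<eta>) ^ (s - t) * R s)"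

lemma Bc_rec: assumes "t \<le> T" shows "Bc t = R t + (2 / \<eta>) * Bc (Suc t)"
proof -
  have "Bc t = R t + (\<Sum>s\<in>{Suc t..T}. (2 / \<eta>) ^ (s - t) * R s)"
    unfolding Bc_def using assms by (subst sum.atLeast_Suc_atMost) auto
  also have "(\<Sum>s\<in>{Suc t..T}. (2 / \<eta>) ^ (s - t) * R s) = (2 / \<eta>) * Bc (Suc t)"
    unfolding Bc_def sum_distrib_left
  proof (rule sum.cong[OF refl])
    fix s assume "s \<in> {Suc t..T}"
    then have "s - t = Suc (s - Suc t)" by auto
    then show "(2 / \<eta>) ^ (s - t) * R s = 2 / \<eta> * ((2 / \<eta>) ^ (s - Suc t) * R s)" by simp
  qed
  finally show ?thesis .
qed

lemma R_eq: assumes t: "t \<in> {1..T}"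
  shows "R t = (\<integral>\<omega>. U (\<pi>h(t := \<pi>B t)) t \<omega> \<partial>M) - (\<integral>\<omega>. U \<pi>h t \<omega> \<partial>M)"
proof -
  have c: "\<pi>h(t := \<pi>B t) \<in> policy_class T Pcl"
    using est backward t by (auto simp: policy_class_def)
  show ?thesis unfolding R_def stage_regret_def
    using V_eq[OF c t] V_eq[OF est t] by simp
qed

definition Dprop :: "nat \<Rightarrow> bool" where
  "Dprop t \<longleftrightarrow> (\<forall>\<pi> \<phi> c. \<pi> \<in> policy_class T Pcl \<longrightarrow> (\<forall>l\<in>{t..T}. \<pi> l = \<pi>h l) \<longrightarrow>
     \<phi> \<in> borel_measurable (hist_space SM t) \<longrightarrow> (\<forall>h. 0 \<le> \<phi> h \<and> \<phi> h \<le> c) \<longrightarrow>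
     (\<integral>\<omega>. \<phi> (H t \<omega>) * (U \<pi>B t \<omega> - U \<pi> t \<omega>) \<partial>M) \<le> c * Bc t)"

lemma A_bound:
  fixes \<phi> :: "'s hist \<Rightarrow> real"
  assumes t: "t \<in> {1..T}" and \<pi>': "\<pi>' \<in> policy_class T Pcl" and agree: "\<forall>l\<in>{Suc t..T}. \<pi>' l = \<pi>h l"
    and same: "\<pi>' t = \<pi>B t"
    and \<phi>: "\<phi> \<in> borel_measurable (hist_space SM t)" and b: "\<And>h. 0 \<le> \<phi> h \<and> \<phi> h \<le> c"
    and IH: "t < T \<Longrightarrow> Dprop (Suc t)"
  shows "(\<integral>\<omega>. \<phi> (H t \<omega>) * (U \<pi>B t \<omega> - U \<pi>' t \<omega>) \<partial>M) \<le> c * (1 / \<eta>) * Bc (Suc t)"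
proof -
  have b': "\<bar>\<phi> h\<bar> \<le> c" for h using b[of h] by auto
  have eq: "(\<integral>\<omega>. \<phi> (H t \<omega>) * (U \<pi>B t \<omega> - U \<pi>' t \<omega>) \<partial>M) =
    (if t < T then (\<integral>\<omega>. (\<phi> (H t \<omega>) * wgt t (\<pi>B t) (H t \<omega>) (A t \<omega>)) * (U \<pi>B (Suc t) \<omega> - U \<pi>' (Suc t) \<omega>) \<partial>M) else 0)"
    by (rule part_a[OF backward \<pi>' t same[symmetric] \<phi> b'])
  show ?thesis
  proof (cases "t < T")
    case False
    then have "t = T" using t by auto
    then show ?thesis using eq by (simp add: Bc_def)
  next
    case True
    have tt: "t \<in> {1..<T}" using True t by auto
    obtain \<phi>' where \<phi>': "\<phi>' \<in> borel_measurable (hist_space SM (Suc t))"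
      "\<forall>h. 0 \<le> \<phi>' h \<and> \<phi>' h \<le> c * (1 / \<eta>)"
      "\<forall>\<omega>. \<phi>' (H (Suc t) \<omega>) = \<phi> (H t \<omega>) * wgt t (\<pi>B t) (H t \<omega>) (A t \<omega>)"
      using phi_lift[OF tt pcl_in[OF backward t] \<phi> b] by blast
    have "(\<integral>\<omega>. \<phi>' (H (Suc t) \<omega>) * (U \<pi>B (Suc t) \<omega> - U \<pi>' (Suc t) \<omega>) \<partial>M) \<le> c * (1 / \<eta>) * Bc (Suc t)"
      using IH[OF True] \<pi>' agree \<phi>'(1,2) unfolding Dprop_def by blast
    then show ?thesis using eq True \<phi>'(3) by simp
  qed
qed

lemma D_step:
  assumes t: "t \<in> {2..T}" and IH: "t < T \<Longrightarrow> Dprop (Suc t)"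
  shows "Dprop t"
  unfolding Dprop_def
proof (intro allI impI)
  fix \<pi> and \<phi> :: "'s hist \<Rightarrow> real" and c :: real
  assume \<pi>: "\<pi> \<in> policy_class T Pcl" and agree: "\<forall>l\<in>{t..T}. \<pi> l = \<pi>h l"
    and \<phi>[measurable]: "\<phi> \<in> borel_measurable (hist_space SM t)" and b: "\<forall>h. 0 \<le> \<phi> h \<and> \<phi> h \<le> c"
  have t1: "t \<in> {1..T}" using t by auto
  have c0: "0 \<le> c" using b by (meson order.trans)
  have b': "\<bar>\<phi> h\<bar> \<le> c" for h using b[rule_format, of h] by auto
  note [measurable] = H_meas'[OF t1]
  define \<pi>t where "\<pi>t = \<pi>(t := \<pi>B t)"
  have \<pi>t: "\<pi>t \<in> policy_class T Pcl" using \<pi> backward t1 by (auto simp: policy_class_def \<pi>t_def)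
  have agree_t: "\<forall>l\<in>{Suc t..T}. \<pi>t l = \<pi>h l" using agree by (auto simp: \<pi>t_def)
  have same: "\<pi>t t = \<pi>B t" by (simp add: \<pi>t_def)
  have qc: "qc \<pi>" "qc \<pi>t" "qc \<pi>B" using \<pi> \<pi>t backward by (auto simp: policy_class_def)
  have rt: "\<pi> t \<in> Pcl t" "\<pi>B t \<in> Pcl t" using pcl_in[OF \<pi> t1] pcl_in[OF backward t1] by auto
  have iB: "integrable M (U \<pi>B t)" by (rule Qf_rho_int[OF qc(3) t1 rt(2)])
  have iP: "integrable M (U \<pi> t)" by (rule Qf_rho_int[OF qc(1) t1 rt(1)])
  have iT: "integrable M (U \<pi>t t)" using Qf_rho_int[OF qc(2) t1 rt(2)] by (simp add: same)
  have h1: "(\<integral>\<omega>. \<phi> (H t \<omega>) * (U \<pi>B t \<omega> - U \<pi>t t \<omega>) \<partial>M) \<le> c * (1 / \<eta>) * Bc (Suc t)"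
    by (rule A_bound[OF t1 \<pi>t agree_t same \<phi>]) (use b IH in auto)
  have h2: "(\<integral>\<omega>. 1 * (U \<pi>B t \<omega> - U \<pi>t t \<omega>) \<partial>M) \<le> 1 * (1 / \<eta>) * Bc (Suc t)"
    by (rule A_bound[OF t1 \<pi>t agree_t same, of "\<lambda>_. 1"]) (use IH in auto)
  have Pnn: "AE \<omega> in M. U \<pi> t \<omega> \<le> U \<pi>B t \<omega>" by (rule opt[OF t qc(1) rt(1)])
  have Nnn: "AE \<omega> in M. U \<pi>t t \<omega> \<le> U \<pi>B t \<omega>" using opt[OF t qc(2) rt(2)] by (simp add: same)
  have RR: "(\<integral>\<omega>. U \<pi>t t \<omega> \<partial>M) - (\<integral>\<omega>. U \<pi> t \<omega> \<partial>M) = R t"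
  proof -
    have "policy_value M T d S A Y t \<pi>t = policy_value M T d S A Y t (\<pi>h(t := \<pi>B t))"
      by (rule pv_cong) (use agree in \<open>auto simp: \<pi>t_def\<close>)
    moreover have "policy_value M T d S A Y t \<pi> = policy_value M T d S A Y t \<pi>h"
      by (rule pv_cong) (use agree in auto)
    ultimately show ?thesis
      unfolding R_def stage_regret_def using V_eq[OF \<pi>t t1] V_eq[OF \<pi> t1] by simp
  qed
  have mi: "integrable M (\<lambda>\<omega>. \<phi> (H t \<omega>) * f \<omega>)" if "integrable M f" for f
    by (rule bounded_mult_integrable[OF that _ b']) measurable
  have split: "(\<integral>\<omega>. \<phi> (H t \<omega>) * (U \<pi>B t \<omega> - U \<pi> t \<omega>) \<partial>M) =
     (\<integral>\<omega>. \<phi> (H t \<omega>) * (U \<pi>B t \<omega> - U \<pi>t t \<omega>) \<partial>M) + (\<integral>\<omega>. \<phi> (H t \<omega>) * (U \<pi>t t \<omega> - U \<pi> t \<omega>) \<partial>M)"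
  proof -
    have "(\<integral>\<omega>. \<phi> (H t \<omega>) * (U \<pi>B t \<omega> - U \<pi> t \<omega>) \<partial>M) =
       (\<integral>\<omega>. \<phi> (H t \<omega>) * (U \<pi>B t \<omega> - U \<pi>t t \<omega>) + \<phi> (H t \<omega>) * (U \<pi>t t \<omega> - U \<pi> t \<omega>) \<partial>M)"
      by (simp add: algebra_simps)
    also have "\<dots> = (\<integral>\<omega>. \<phi> (H t \<omega>) * (U \<pi>B t \<omega> - U \<pi>t t \<omega>) \<partial>M) + (\<integral>\<omega>. \<phi> (H t \<omega>) * (U \<pi>t t \<omega> - U \<pi> t \<omega>) \<partial>M)"
      by (intro Bochner_Integration.integral_add mi Bochner_Integration.integrable_diff iB iP iT)
    finally show ?thesis .
  qed
  have I2: "(\<integral>\<omega>. \<phi> (H t \<omega>) * (U \<pi>t t \<omega> - U \<pi> t \<omega>) \<partial>M) \<le> (\<integral>\<omega>. c * (U \<pi>B t \<omega> - U \<pi> t \<omega>) \<partial>M)"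
  proof (rule integral_mono_AE)
    show "integrable M (\<lambda>\<omega>. \<phi> (H t \<omega>) * (U \<pi>t t \<omega> - U \<pi> t \<omega>))"
      by (intro mi Bochner_Integration.integrable_diff iP iT)
    show "integrable M (\<lambda>\<omega>. c * (U \<pi>B t \<omega> - U \<pi> t \<omega>))"
      by (intro integrable_mult_right Bochner_Integration.integrable_diff iP iB)
    show "AE \<omega> in M. \<phi> (H t \<omega>) * (U \<pi>t t \<omega> - U \<pi> t \<omega>) \<le> c * (U \<pi>B t \<omega> - U \<pi> t \<omega>)"
      using Pnn Nnn
    proof eventually_elim
      case (elim \<omega>)
      have "\<phi> (H t \<omega>) * (U \<pi>t t \<omega> - U \<pi> t \<omega>) \<le> \<phi> (H t \<omega>) * (U \<pi>B t \<omega> - U \<pi> t \<omega>)"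
        using elim b[rule_format, of "H t \<omega>"] by (intro mult_left_mono) auto
      also have "\<dots> \<le> c * (U \<pi>B t \<omega> - U \<pi> t \<omega>)"
        using elim b[rule_format, of "H t \<omega>"] by (intro mult_right_mono) auto
      finally show ?case .
    qed
  qed
  have I3: "(\<integral>\<omega>. c * (U \<pi>B t \<omega> - U \<pi> t \<omega>) \<partial>M) = c * (R t + (\<integral>\<omega>. 1 * (U \<pi>B t \<omega> - U \<pi>t t \<omega>) \<partial>M))"
  proof -
    have x: "(\<integral>\<omega>. c * (U \<pi>B t \<omega> - U \<pi> t \<omega>) \<partial>M) = c * ((\<integral>\<omega>. U \<pi>B t \<omega> \<partial>M) - (\<integral>\<omega>. U \<pi> t \<omega> \<partial>M))"
      using iB iP by simp
    have y: "(\<integral>\<omega>. 1 * (U \<pi>B t \<omega> - U \<pi>t t \<omega>) \<partial>M) = (\<integral>\<omega>. U \<pi>B t \<omega> \<partial>M) - (\<integral>\<omega>. U \<pi>t t \<omega> \<partial>M)"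
      using iB iT by simp
    show ?thesis unfolding x y RR[symmetric] by (simp add: algebra_simps)
  qed
  have "(\<integral>\<omega>. \<phi> (H t \<omega>) * (U \<pi>B t \<omega> - U \<pi> t \<omega>) \<partial>M) \<le>
      c * (1 / \<eta>) * Bc (Suc t) + c * (R t + (\<integral>\<omega>. 1 * (U \<pi>B t \<omega> - U \<pi>t t \<omega>) \<partial>M))"
    using split I2 I3 h1 by linarith
  also have "\<dots> \<le> c * (1 / \<eta>) * Bc (Suc t) + c * (R t + 1 * (1 / \<eta>) * Bc (Suc t))"
    using h2 c0 by (intro add_left_mono mult_left_mono) auto
  also have "\<dots> = c * Bc t" using Bc_rec[of t] t by (simp add: algebra_simps)
  finally show "(\<integral>\<omega>. \<phi> (H t \<omega>) * (U \<pi>B t \<omega> - U \<pi> t \<omega>) \<partial>M) \<le> c * Bc t" .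
qed

lemma Dprop_all: "t \<in> {2..T} \<Longrightarrow> Dprop t"
proof -
  assume t: "t \<in> {2..T}"
  have "2 \<le> t \<longrightarrow> Dprop t"
  proof (rule backward_induct[where P="\<lambda>t. 2 \<le> t \<longrightarrow> Dprop t"])
    show "t \<in> {1..T}" using t by auto
    show "2 \<le> T \<longrightarrow> Dprop T" by (auto intro: D_step)
    fix t assume "t \<in> {1..<T}" "2 \<le> Suc t \<longrightarrow> Dprop (Suc t)"
    then show "2 \<le> t \<longrightarrow> Dprop t" by (auto intro: D_step)
  qed
  then show ?thesis using t by auto
qed

end

context setting2 begin

lemma W_U: "\<pi> \<in> policy_class T Pcl \<Longrightarrow> welfare M T d S Y \<pi> = (\<integral>\<omega>. U \<pi> 1 \<omega> \<partial>M)"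
  using W_eq V_eq[of \<pi> 1] T_pos by simp

lemma main_bound:
  "regret M T d S Y Pcl \<pi>h
     \<le> stage_regret M T d S A Y 1 \<pi>h (\<pi>B 1)
       + (\<Sum>t\<in>{2..T}. (2 ^ (t - 2) / \<eta> ^ (t - 1)) * stage_regret M T d S A Y t \<pi>h (\<pi>B t))"
proof -
  have t1: "1 \<in> {1..T}" using T_pos by auto
  have sup: "(SUP \<pi>'\<in>policy_class T Pcl. welfare M T d S Y \<pi>') \<le> welfare M T d S Y \<pi>B"
  proof (rule cSUP_least)
    show "policy_class T Pcl \<noteq> {}" using backward by auto
    fix \<pi>' assume "\<pi>' \<in> policy_class T Pcl"
    then show "welfare M T d S Y \<pi>' \<le> welfare M T d S Y \<pi>B"
      using W1_le W_U backward by simp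
  qed
  define \<pi>1 where "\<pi>1 = \<pi>h(1 := \<pi>B 1)"
  have \<pi>1: "\<pi>1 \<in> policy_class T Pcl" using est backward t1 by (auto simp: policy_class_def \<pi>1_def)
  have qc: "qc \<pi>1" "qc \<pi>B" "qc \<pi>h" using \<pi>1 backward est by (auto simp: policy_class_def)
  have iB: "integrable M (U \<pi>B 1)" by (rule Qf_rho_int[OF qc(2) t1 pcl_in[OF backward t1]])
  have i1: "integrable M (U \<pi>1 1)" by (rule Qf_rho_int[OF qc(1) t1 pcl_in[OF \<pi>1 t1]])
  have ih: "integrable M (U \<pi>h 1)" by (rule Qf_rho_int[OF qc(3) t1 pcl_in[OF est t1]])
  have Ab: "(\<integral>\<omega>. 1 * (U \<pi>B 1 \<omega> - U \<pi>1 1 \<omega>) \<partial>M) \<le> 1 * (1 / \<eta>) * Bc (Suc 1)"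
  proof (rule A_bound[OF t1 \<pi>1, of "\<lambda>_. 1"])
    show "\<forall>l\<in>{Suc 1..T}. \<pi>1 l = \<pi>h l" by (simp add: \<pi>1_def)
    show "\<pi>1 1 = \<pi>B 1" by (simp add: \<pi>1_def)
    show "1 < T \<Longrightarrow> Dprop (Suc 1)" by (rule Dprop_all) auto
  qed auto
  have R1: "R 1 = (\<integral>\<omega>. U \<pi>1 1 \<omega> \<partial>M) - (\<integral>\<omega>. U \<pi>h 1 \<omega> \<partial>M)"
    using R_eq[OF t1] by (simp add: \<pi>1_def)
  have diff: "welfare M T d S Y \<pi>B - welfare M T d S Y \<pi>h \<le> R 1 + (1 / \<eta>) * Bc 2"
  proof -
    have "(\<integral>\<omega>. 1 * (U \<pi>B 1 \<omega> - U \<pi>1 1 \<omega>) \<partial>M) = (\<integral>\<omega>. U \<pi>B 1 \<omega> \<partial>M) - (\<integral>\<omega>. U \<pi>1 1 \<omega> \<partial>M)"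
      using iB i1 by simp
    then show ?thesis using Ab R1 W_U[OF backward] W_U[OF est] by (simp add: numeral_2_eq_2)
  qed
  have BB: "(1 / \<eta>) * Bc 2 = (\<Sum>t\<in>{2..T}. (2 ^ (t - 2) / \<eta> ^ (t - 1)) * R t)"
    unfolding Bc_def sum_distrib_left
  proof (rule sum.cong[OF refl])
    fix s assume s: "s \<in> {2..T}"
    then have e: "s - 1 = Suc (s - 2)" by auto
    show "1 / \<eta> * ((2 / \<eta>) ^ (s - 2) * R s) = 2 ^ (s - 2) / \<eta> ^ (s - 1) * R s"
      unfolding e using eta by (simp add: power_divide field_simps)
  qed
  have "regret M T d S Y Pcl \<pi>h \<le> welfare M T d S Y \<pi>B - welfare M T d S Y \<pi>h"
    unfolding regret_def using sup by simp
  also have "\<dots> \<le> R 1 + (\<Sum>t\<in>{2..T}. (2 ^ (t - 2) / \<eta> ^ (t - 1)) * R t)"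
    using diff BB by simp
  finally show ?thesis by (simp add: R_def)
qed

end

theorem lemma3:
  fixes M :: "'w measure" and SM :: "'s measure"
    and T :: nat and d :: "nat \<Rightarrow> nat"
    and S :: "nat \<Rightarrow> nat list \<Rightarrow> 'w \<Rightarrow> 's"
    and Y :: "nat \<Rightarrow> nat list \<Rightarrow> 'w \<Rightarrow> real"
    and A :: "nat \<Rightarrow> 'w \<Rightarrow> nat"
    and Pcl :: "nat \<Rightarrow> ('s hist \<Rightarrow> nat) set"
    and e :: "nat \<Rightarrow> 's hist \<Rightarrow> nat \<Rightarrow> real"
    and Qf :: "(nat \<Rightarrow> 's hist \<Rightarrow> nat) \<Rightarrow> nat \<Rightarrow> 's hist \<Rightarrow> nat \<Rightarrow> real"
    and \<eta> :: real
    and \<pi>B \<pi>h :: "nat \<Rightarrow> 's hist \<Rightarrow> nat"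
  assumes prob: "prob_space M"
    and T_pos: "1 \<le> T"
    and A_meas: "\<And>t. t \<in> {1..T} \<Longrightarrow> A t \<in> measurable M (count_space UNIV)"
    and A_range: "\<And>t \<omega>. t \<in> {1..T} \<Longrightarrow> \<omega> \<in> space M \<Longrightarrow> A t \<omega> < d t"
    and S_meas: "\<And>t a. t \<in> {1..T} \<Longrightarrow> a \<in> act_seqs d (t - 1) \<Longrightarrow> S t a \<in> measurable M SM"
    and Y_int: "\<And>t a. t \<in> {1..T} \<Longrightarrow> a \<in> act_seqs d t \<Longrightarrow> integrable M (Y t a)"
    and Pi_meas: "\<And>t. t \<in> {1..T} \<Longrightarrow> Pcl t \<subseteq> measurable (hist_space SM t) (count_space UNIV)"
    and Pi_range: "\<And>t \<pi> h. t \<in> {1..T} \<Longrightarrow> \<pi> \<in> Pcl t \<Longrightarrow> \<pi> h < d t"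
    and propensity: "\<And>t. t \<in> {1..T} \<Longrightarrow> is_propensity M SM S A t (e t)"
    and Q: "is_Q_family M T SM S A Y Pcl Qf"
    and ignorability: "seq_ignorability M T d SM S A Y"
    and eta: "0 < \<eta>" "\<eta> < 1"
    and overlap: "\<And>t. t \<in> {1..T} \<Longrightarrow>
       AE \<omega> in M. \<forall>a. (\<exists>\<pi>\<in>Pcl t. \<pi> (obs_hist S A t \<omega>) = a) \<longrightarrow> \<eta> \<le> e t (obs_hist S A t \<omega>) a"
    and correct_spec: "\<exists>\<pi>s. (\<forall>t\<in>{2..T}. \<pi>s t \<in> Pcl t) \<and>
       (\<forall>t\<in>{2..T}. AE \<omega> in M. \<forall>\<pi>\<in>Pcl t.
          Qf \<pi>s t (obs_hist S A t \<omega>) (\<pi> (obs_hist S A t \<omega>))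
          \<le> Qf \<pi>s t (obs_hist S A t \<omega>) (\<pi>s t (obs_hist S A t \<omega>)))"
    and backward: "\<pi>B \<in> policy_class T Pcl"
    and backward_argmax: "\<And>t \<pi>. t \<in> {1..T} \<Longrightarrow> \<pi> \<in> Pcl t \<Longrightarrow>
       (\<integral>\<omega>. Qf \<pi>B t (obs_hist S A t \<omega>) (\<pi> (obs_hist S A t \<omega>)) \<partial>M)
       \<le> (\<integral>\<omega>. Qf \<pi>B t (obs_hist S A t \<omega>) (\<pi>B t (obs_hist S A t \<omega>)) \<partial>M)"
    and est: "\<pi>h \<in> policy_class T Pcl"
  shows "regret M T d S Y Pcl \<pi>h
     \<le> stage_regret M T d S A Y 1 \<pi>h (\<pi>B 1)
       + (\<Sum>t\<in>{2..T}. (2 ^ (t - 2) / \<eta> ^ (t - 1)) * stage_regret M T d S A Y t \<pi>h (\<pi>B t))"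
proof -
  obtain \<pi>s where \<pi>s1: "\<forall>t\<in>{2..T}. \<pi>s t \<in> Pcl t"
    and \<pi>s2: "\<forall>t\<in>{2..T}. AE \<omega> in M. \<forall>\<pi>\<in>Pcl t.
          Qf \<pi>s t (obs_hist S A t \<omega>) (\<pi> (obs_hist S A t \<omega>))
          \<le> Qf \<pi>s t (obs_hist S A t \<omega>) (\<pi>s t (obs_hist S A t \<omega>))"
    using correct_spec by blast
  have st: "setting M SM T d S Y A Pcl e Qf \<eta>"
    by (rule setting.intro) (fact prob T_pos A_meas A_range S_meas Y_int Pi_meas Pi_range propensity Q
        ignorability eta overlap)+
  have st2: "setting2_axioms M T S A Pcl Qf \<pi>s \<pi>B \<pi>h"
    by (rule setting2_axioms.intro) (fact \<pi>s1 \<pi>s2 backward backward_argmax est)+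
  interpret setting2 M SM T d S Y A Pcl e Qf \<eta> \<pi>s \<pi>B \<pi>h
    by (rule setting2.intro[OF st st2])
  show ?thesis by (rule main_bound)
qed

end
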